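(* Let $G$ be a maximal outerplanar graph of order $n\geq 4$, and let $t$ be the number of vertices of degree $2$ in $G$. Then $\gamma_{\times 2}(G)\leq \lfloor \frac{n+t}{2}\rfloor$ if $t<\frac{n}{3}$, and $\gamma_{\times 2}(G)\leq n-t$ otherwise. *)

theory Defs
  imports Complex_Main
begin

definition simple_graph :: "'a set \<Rightarrow> ('a \<Rightarrow> 'a \<Rightarrow> bool) \<Rightarrow> bool" where
  "simple_graph V E \<longleftrightarrow> finite V \<and>
     (\<forall>u v. E u v \<longrightarrow> u \<in> V \<and> v \<in> V \<and> u \<noteq> v \<and> E v u)"

definition degree :: "'a set \<Rightarrow> ('a \<Rightarrow> 'a \<Rightarrow> bool) \<Rightarrow> 'a \<Rightarrow> nat" where
  "degree V E v = card {u \<in> V. E v u}"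

definition chords_cross :: "nat \<Rightarrow> nat \<Rightarrow> nat \<Rightarrow> nat \<Rightarrow> bool" where
  "chords_cross i j k l \<longleftrightarrow>
     (min i j < k \<and> k < max i j \<and> (l < min i j \<or> max i j < l))"

text \<open>Outerplanar: the vertices can be placed on a circle (in a cyclic order
  given by a bijection onto positions 0..n-1) so that the edges, drawn as
  straight chords, do not cross.\<close>
definition outerplanar :: "'a set \<Rightarrow> ('a \<Rightarrow> 'a \<Rightarrow> bool) \<Rightarrow> bool" where
  "outerplanar V E \<longleftrightarrow> simple_graph V E \<and>
     (\<exists>f. bij_betw f V {0..<card V} \<and>
          (\<forall>a b c d. E a b \<and> E c d \<longrightarrow> \<not> chords_cross (f a) (f b) (f c) (f d)))"

definition add_edge :: "('a \<Rightarrow> 'a \<Rightarrow> bool) \<Rightarrow> 'a \<Rightarrow> 'a \<Rightarrow> 'a \<Rightarrow> 'a \<Rightarrow> bool" where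
  "add_edge E u v = (\<lambda>x y. E x y \<or> (x = u \<and> y = v) \<or> (x = v \<and> y = u))"

definition maximal_outerplanar :: "'a set \<Rightarrow> ('a \<Rightarrow> 'a \<Rightarrow> bool) \<Rightarrow> bool" where
  "maximal_outerplanar V E \<longleftrightarrow> outerplanar V E \<and>
     (\<forall>u\<in>V. \<forall>v\<in>V. u \<noteq> v \<and> \<not> E u v \<longrightarrow> \<not> outerplanar V (add_edge E u v))"

definition double_dominating :: "'a set \<Rightarrow> ('a \<Rightarrow> 'a \<Rightarrow> bool) \<Rightarrow> 'a set \<Rightarrow> bool" where
  "double_dominating V E D \<longleftrightarrow> D \<subseteq> V \<and>
     (\<forall>v\<in>V. card ({u \<in> D. u = v \<or> E v u}) \<ge> 2)"

definition double_domination_number :: "'a set \<Rightarrow> ('a \<Rightarrow> 'a \<Rightarrow> bool) \<Rightarrow> nat" where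
  "double_domination_number V E = (LEAST k. \<exists>D. double_dominating V E D \<and> card D = k)"

end

theory Submission
  imports Defs
begin



definition tri :: "nat \<Rightarrow> (nat \<Rightarrow> nat \<Rightarrow> bool) \<Rightarrow> bool" where
  "tri n G \<longleftrightarrow> (\<forall>p q. G p q \<longrightarrow> p < n \<and> q < n \<and> p \<noteq> q \<and> G q p) \<and>
     (\<forall>a b c d. G a b \<and> G c d \<longrightarrow> \<not> chords_cross a b c d) \<and>
     (\<forall>p q. p < n \<and> q < n \<and> p \<noteq> q \<and> \<not> G p q \<longrightarrow> (\<exists>a b. G a b \<and> chords_cross p q a b))"

lemma cross_swap:
  "chords_cross a b p q \<Longrightarrow> chords_cross p q a b \<or> chords_cross p q b a"
  unfolding chords_cross_def by (auto simp: min_def max_def split: if_splits)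

lemma rot_mod: fixes x n c :: nat assumes "x < n" "c < n" shows "(x + c) mod n = (if x + c < n then x + c else x + c - n)"
  proof (cases "x + c < n")
  case False
  then have "(x + c) mod n = (x + c - n) mod n" using le_mod_geq[of n "x + c"] by simp
  also have "... = x + c - n" using assms by simp
  finally show ?thesis using False by simp
qed simp

lemma cross_rot:
  assumes "x < n" "y < n" "z < n" "w < n" "c < n"
    and "chords_cross ((x + c) mod n) ((y + c) mod n) ((z + c) mod n) ((w + c) mod n)"
  shows "chords_cross x y z w \<or> chords_cross x y w z"
  using assms unfolding rot_mod[OF assms(1,5)] rot_mod[OF assms(2,5)] rot_mod[OF assms(3,5)] rot_mod[OF assms(4,5)]
  unfolding chords_cross_def by (auto simp: min_def max_def split: if_splits)

definition deg :: "(nat \<Rightarrow> nat \<Rightarrow> bool) \<Rightarrow> nat \<Rightarrow> nat" where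
  "deg G v = card {u. G v u}"

definition tau :: "(nat \<Rightarrow> nat \<Rightarrow> bool) \<Rightarrow> nat \<Rightarrow> nat \<Rightarrow> nat" where
  "tau G i j = card {v. i < v \<and> v < j \<and> deg G v = 2}"

definition bset :: "nat \<Rightarrow> nat \<Rightarrow> bool \<Rightarrow> bool \<Rightarrow> nat set" where
  "bset i j dx dy = {w. (w = i \<and> dx) \<or> (w = j \<and> dy)}"

definition sol :: "(nat \<Rightarrow> nat \<Rightarrow> bool) \<Rightarrow> nat \<Rightarrow> nat \<Rightarrow> bool \<Rightarrow> bool \<Rightarrow> nat \<Rightarrow> nat \<Rightarrow> nat set \<Rightarrow> bool" where
  "sol G i j dx dy rx ry D \<longleftrightarrow> D \<subseteq> {i<..<j} \<and>
     (\<forall>v. i < v \<and> v < j \<longrightarrow> 2 \<le> card {u \<in> D \<union> bset i j dx dy. u = v \<or> G v u}) \<and>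
     rx \<le> card {u \<in> D. G i u} \<and> ry \<le> card {u \<in> D. G j u}"

definition good :: "(nat \<Rightarrow> nat \<Rightarrow> bool) \<Rightarrow> nat \<Rightarrow> nat \<Rightarrow> bool \<Rightarrow> bool \<Rightarrow> nat \<Rightarrow> nat \<Rightarrow> nat \<Rightarrow> bool" where
  "good G i j dx dy rx ry c \<longleftrightarrow> (\<exists>D. sol G i j dx dy rx ry D \<and> 2 * card D + c \<le> (j - i - 1) + tau G i j)"

lemma tau_split:
  assumes "i < k" "k < j"
  shows "tau G i j = tau G i k + tau G k j + (if deg G k = 2 then 1 else 0)"
proof -
  have e: "{v. i < v \<and> v < j \<and> deg G v = 2} =
    ({v. i < v \<and> v < k \<and> deg G v = 2} \<union> {v. k < v \<and> v < j \<and> deg G v = 2}) \<union> {v. v = k \<and> deg G v = 2}"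
    using assms by auto
  have f1: "finite {v. i < v \<and> v < k \<and> deg G v = 2}" by (rule finite_subset[of _ "{..<k}"]) auto
  have f2: "finite {v. k < v \<and> v < j \<and> deg G v = 2}" by (rule finite_subset[of _ "{..<j}"]) auto
  have "{v. v = k \<and> deg G v = 2} = (if deg G k = 2 then {k} else {})" by auto
  then have c3: "card {v. v = k \<and> deg G v = 2} = (if deg G k = 2 then 1 else 0)" by simp
  show ?thesis unfolding tau_def e
    apply (subst card_Un_disjoint)
    using f1 f2 apply auto[3]
    apply (subst card_Un_disjoint)
    using f1 f2 c3 by auto
qed

lemma card_bset: "i \<noteq> j \<Longrightarrow> card (bset i j dx dy) = of_bool dx + of_bool dy"
  proof -
  have "bset i j dx dy = (if dx then {i} else {}) \<union> (if dy then {j} else {})" unfolding bset_def by auto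
  then show "i \<noteq> j \<Longrightarrow> ?thesis" by (cases dx; cases dy) auto
qed

lemma finite_bset: "finite (bset i j dx dy)"
  unfolding bset_def by (rule finite_subset[of _ "{i,j}"]) auto

context
  fixes n :: nat and G :: "nat \<Rightarrow> nat \<Rightarrow> bool"
  assumes T: "tri n G"
begin

lemma Gsym: "G p q \<Longrightarrow> G q p" using T unfolding tri_def by blast
lemma Gbnd: "G p q \<Longrightarrow> p < n \<and> q < n" using T unfolding tri_def by blast
lemma Girr: "G p q \<Longrightarrow> p \<noteq> q" using T unfolding tri_def by blast
lemma nocross: "G a b \<Longrightarrow> G c d \<Longrightarrow> \<not> chords_cross a b c d" using T unfolding tri_def by blast
lemma maxl: "p < n \<Longrightarrow> q < n \<Longrightarrow> p \<noteq> q \<Longrightarrow> \<not> G p q \<Longrightarrow> \<exists>a b. G a b \<and> chords_cross p q a b"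
  using T unfolding tri_def by blast

lemma boundary: assumes "Suc p < n" shows "G p (Suc p)"
proof (rule ccontr)
  assume "\<not> G p (Suc p)"
  then obtain a b where "G a b" "chords_cross p (Suc p) a b" using maxl[of p "Suc p"] assms by auto
  then show False unfolding chords_cross_def by auto
qed

lemma wrap: assumes "2 \<le> n" shows "G 0 (n - 1)"
proof (rule ccontr)
  assume "\<not> G 0 (n - 1)"
  then obtain a b where "G a b" "chords_cross 0 (n - 1) a b" using maxl[of 0 "n - 1"] assms by auto
  then show False using Gbnd[of a b] unfolding chords_cross_def by auto
qed

lemma nested: assumes "G i j" "i < v" "v < j" "G v u" shows "i \<le> u \<and> u \<le> j"
proof (rule ccontr)
  assume "\<not> (i \<le> u \<and> u \<le> j)"
  then have "chords_cross i j v u" using assms unfolding chords_cross_def by auto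
  then show False using nocross assms by blast
qed

lemma nbr_fin: "finite {u. G v u}"
  by (rule finite_subset[of _ "{..<n}"]) (auto dest: Gbnd)

lemma apex: assumes "G i j" "Suc i < j" shows "\<exists>k. i < k \<and> k < j \<and> G i k \<and> G k j"
proof -
  define K where "K = {k. i < k \<and> k < j \<and> G i k}"
  have jn: "j < n" using Gbnd[OF assms(1)] by simp
  have fK: "finite K" unfolding K_def by (rule finite_subset[of _ "{..<j}"]) auto
  have "Suc i \<in> K" unfolding K_def using assms jn boundary[of i] by auto
  then have ne: "K \<noteq> {}" by auto
  define k where "k = Max K"
  have kK: "k \<in> K" unfolding k_def using fK ne by simp
  have kmax: "\<And>x. x \<in> K \<Longrightarrow> x \<le> k" unfolding k_def using fK by simp
  have ik: "i < k" "k < j" "G i k" using kK unfolding K_def by auto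
  have "G k j"
  proof (rule ccontr)
    assume nG: "\<not> G k j"
    obtain a b where ab: "G a b" "chords_cross k j a b" using maxl[of k j] nG ik jn by auto
    then have a: "k < a" "a < j" and b: "b < k \<or> j < b" using ik unfolding chords_cross_def by auto
    show False
    proof (cases "j < b")
      case True
      then have "chords_cross i j a b" using a ik unfolding chords_cross_def by auto
      then show ?thesis using nocross assms(1) ab(1) by blast
    next
      case False
      then have bk: "b < k" using b by simp
      consider "b < i" | "b = i" | "i < b" by linarith
      then show ?thesis
      proof cases
        case 1
        then have "chords_cross i j a b" using a ik unfolding chords_cross_def by auto
        then show ?thesis using nocross assms(1) ab(1) by blast
      next
        case 2
        then have "a \<in> K" unfolding K_def using a ik ab(1) Gsym by auto
        then show ?thesis using kmax a by fastforce
      next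
        case 3
        then have "chords_cross i k b a" using a bk ik unfolding chords_cross_def by auto
        then show ?thesis using nocross ik(3) Gsym[OF ab(1)] by blast
      qed
    qed
  qed
  then show ?thesis using ik by blast
qed

lemma apex_deg2:
  assumes "G i k" "G k j" "G i j" "i < k" "k < j"
  shows "deg G k = 2 \<longleftrightarrow> k = Suc i \<and> j = Suc k"
proof
  assume d: "deg G k = 2"
  show "k = Suc i \<and> j = Suc k"
  proof (rule ccontr)
    assume "\<not> (k = Suc i \<and> j = Suc k)"
    then consider "k \<noteq> Suc i" | "j \<noteq> Suc k" by blast
    then show False
    proof cases
      case 1
      have kn: "k < n" using Gbnd[OF assms(2)] by simp
      have "G (k - 1) k" using boundary[of "k - 1"] 1 assms kn by simp
      then have "{i, k - 1, j} \<subseteq> {u. G k u}" using Gsym assms by auto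
      then have "card {i, k - 1, j} \<le> deg G k" unfolding deg_def using card_mono nbr_fin by blast
      moreover have "card {i, k - 1, j} = 3" using 1 assms by auto
      ultimately show False using d by simp
    next
      case 2
      have kn: "Suc k < n" using Gbnd[OF assms(2)] 2 assms by simp
      have "G k (Suc k)" using boundary kn by simp
      then have "{i, Suc k, j} \<subseteq> {u. G k u}" using Gsym assms by auto
      then have "card {i, Suc k, j} \<le> deg G k" unfolding deg_def using card_mono nbr_fin by blast
      moreover have "card {i, Suc k, j} = 3" using 2 assms by auto
      ultimately show False using d by simp
    qed
  qed
next
  assume a: "k = Suc i \<and> j = Suc k"
  have "{u. G k u} = {i, j}"
  proof
    show "{u. G k u} \<subseteq> {i, j}"
    proof
      fix u assume "u \<in> {u. G k u}"
      then have "G k u" by simp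
      then have "i \<le> u \<and> u \<le> j" "u \<noteq> k" using nested[OF assms(3) assms(4,5)] Girr by auto
      then show "u \<in> {i, j}" using a by auto
    qed
    show "{i, j} \<subseteq> {u. G k u}" using assms Gsym by auto
  qed
  then show "deg G k = 2" unfolding deg_def using assms by simp
qed


lemma sol_fin: "sol G i j dx dy rx ry D \<Longrightarrow> finite D"
  unfolding sol_def by (auto intro: finite_subset[of _ "{i<..<j}"])

lemma sol_comb:
  assumes ik: "i < k" and kj: "k < j" and Gik: "G i k" and Gkj: "G k j" and Gij: "G i j"
    and L: "sol G i k dx dk rLx rLk DL" and R: "sol G k j dk dy rRk rRy DR"
    and rx: "rx \<le> rLx + of_bool dk" and ry: "ry \<le> rRy + of_bool dk"
    and rk: "2 \<le> rLk + rRk + of_bool dk + of_bool dx + of_bool dy"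
  shows "sol G i j dx dy rx ry (DL \<union> DR \<union> {w. w = k \<and> dk}) \<and>
         card (DL \<union> DR \<union> {w. w = k \<and> dk}) = card DL + card DR + of_bool dk"
proof -
  define K where "K = {w. w = k \<and> dk}"
  define D where "D = DL \<union> DR \<union> K"
  have fL: "finite DL" using sol_fin[OF L] .
  have fR: "finite DR" using sol_fin[OF R] .
  have fK: "finite K" unfolding K_def by (rule finite_subset[of _ "{k}"]) auto
  have cK: "card K = of_bool dk" unfolding K_def by (cases dk) auto
  have sL: "DL \<subseteq> {i<..<k}" using L unfolding sol_def by blast
  have sR: "DR \<subseteq> {k<..<j}" using R unfolding sol_def by blast
  have sK: "K \<subseteq> {k}" unfolding K_def by auto
  have fD: "finite D" unfolding D_def using fL fR fK by simp
  have cardD: "card D = card DL + card DR + of_bool dk"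
    unfolding D_def
    apply (subst card_Un_disjoint)
    using fL fR fK sL sR sK apply auto[3]
    apply (subst card_Un_disjoint)
    using fL fR sL sR cK by fastforce+
  have subD: "D \<subseteq> {i<..<j}" unfolding D_def using sL sR sK ik kj by auto
  have fB: "finite (D \<union> bset i j dx dy)" using fD finite_bset by simp
  have inner: "2 \<le> card {u \<in> D \<union> bset i j dx dy. u = v \<or> G v u}" if v: "i < v" "v < j" for v
  proof -
    consider "v < k" | "v = k" | "k < v" by linarith
    then show ?thesis
    proof cases
      case 1
      have "2 \<le> card {u \<in> DL \<union> bset i k dx dk. u = v \<or> G v u}" using L v 1 unfolding sol_def by blast
      also have "\<dots> \<le> card {u \<in> D \<union> bset i j dx dy. u = v \<or> G v u}"
        apply (rule card_mono)
        using fB apply simp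
        unfolding D_def K_def bset_def by auto
      finally show ?thesis .
    next
      case 3
      have "2 \<le> card {u \<in> DR \<union> bset k j dk dy. u = v \<or> G v u}" using R v 3 unfolding sol_def by blast
      also have "\<dots> \<le> card {u \<in> D \<union> bset i j dx dy. u = v \<or> G v u}"
        apply (rule card_mono)
        using fB apply simp
        unfolding D_def K_def bset_def by auto
      finally show ?thesis .
    next
      case 2
      define A1 where "A1 = {u \<in> DL. G k u}"
      define A2 where "A2 = {u \<in> DR. G k u}"
      have f1: "finite A1" unfolding A1_def using fL by simp
      have f2: "finite A2" unfolding A2_def using fR by simp
      have c1: "rLk \<le> card A1" using L unfolding sol_def A1_def by blast
      have c2: "rRk \<le> card A2" using R unfolding sol_def A2_def by blast
      have s1: "A1 \<subseteq> {i<..<k}" unfolding A1_def using sL by auto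
      have s2: "A2 \<subseteq> {k<..<j}" unfolding A2_def using sR by auto
      have sB: "bset i j dx dy \<subseteq> {i, j}" unfolding bset_def by auto
      have cB: "card (bset i j dx dy) = of_bool dx + of_bool dy" using card_bset ik kj by simp
      have e: "card (A1 \<union> A2 \<union> K \<union> bset i j dx dy) = card A1 + card A2 + card K + card (bset i j dx dy)"
        apply (subst card_Un_disjoint)
        using f1 f2 fK finite_bset apply simp
        using f1 f2 fK finite_bset apply simp
        using s1 s2 sK sB ik kj apply fastforce
        apply (subst card_Un_disjoint)
        using f1 f2 fK apply simp
        using f1 f2 fK apply simp
        using s1 s2 sK apply fastforce
        apply (subst card_Un_disjoint)
        using f1 f2 s1 s2 by fastforce+
      have m: "card (A1 \<union> A2 \<union> K \<union> bset i j dx dy) \<le> card {u \<in> D \<union> bset i j dx dy. u = v \<or> G v u}"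
        apply (rule card_mono)
        using fB apply simp
        unfolding D_def A1_def A2_def bset_def K_def using 2 Gsym[OF Gik] Gkj by auto
      show ?thesis using e m c1 c2 cK cB rk by linarith
    qed
  qed
  have rxo: "rx \<le> card {u \<in> D. G i u}"
  proof -
    have e: "card ({u \<in> DL. G i u} \<union> K) = card {u \<in> DL. G i u} + card K"
      apply (rule card_Un_disjoint) using fL fK sL sK by auto
    have m: "card ({u \<in> DL. G i u} \<union> K) \<le> card {u \<in> D. G i u}"
      apply (rule card_mono) using fD apply simp
      unfolding D_def K_def using Gik by auto
    show ?thesis using e m L cK rx unfolding sol_def by linarith
  qed
  have ryo: "ry \<le> card {u \<in> D. G j u}"
  proof -
    have e: "card ({u \<in> DR. G j u} \<union> K) = card {u \<in> DR. G j u} + card K"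
      apply (rule card_Un_disjoint) using fR fK sR sK by auto
    have m: "card ({u \<in> DR. G j u} \<union> K) \<le> card {u \<in> D. G j u}"
      apply (rule card_mono) using fD apply simp
      unfolding D_def K_def using Gsym[OF Gkj] by auto
    show ?thesis using e m R cK ry unfolding sol_def by linarith
  qed
  show ?thesis using subD inner rxo ryo cardD unfolding sol_def D_def K_def by blast
qed

lemma good_comb:
  assumes ik: "i < k" and kj: "k < j" and Gik: "G i k" and Gkj: "G k j" and Gij: "G i j"
    and L: "good G i k dx dk rLx rLk cL" and R: "good G k j dk dy rRk rRy cR"
    and rx: "rx \<le> rLx + of_bool dk" and ry: "ry \<le> rRy + of_bool dk"
    and rk: "2 \<le> rLk + rRk + of_bool dk + of_bool dx + of_bool dy"
    and cc: "2 * of_bool dk + c \<le> cL + cR + 1 + (if k = Suc i \<and> j = Suc k then 1 else 0)"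
  shows "good G i j dx dy rx ry c"
proof -
  obtain DL where DL: "sol G i k dx dk rLx rLk DL" "2 * card DL + cL \<le> (k - i - 1) + tau G i k"
    using L unfolding good_def by blast
  obtain DR where DR: "sol G k j dk dy rRk rRy DR" "2 * card DR + cR \<le> (j - k - 1) + tau G k j"
    using R unfolding good_def by blast
  have S: "sol G i j dx dy rx ry (DL \<union> DR \<union> {w. w = k \<and> dk}) \<and>
         card (DL \<union> DR \<union> {w. w = k \<and> dk}) = card DL + card DR + of_bool dk"
    by (rule sol_comb[OF ik kj Gik Gkj Gij DL(1) DR(1) rx ry rk])
  have tt: "tau G i j = tau G i k + tau G k j + (if k = Suc i \<and> j = Suc k then 1 else 0)"
    using tau_split[OF ik kj, of G] apex_deg2[OF Gik Gkj Gij ik kj] by simp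
  show ?thesis unfolding good_def
    apply (rule exI[of _ "DL \<union> DR \<union> {w. w = k \<and> dk}"])
    using S tt DL(2) DR(2) cc ik kj by auto
qed

end

lemma good_leaf: "good G i (Suc i) dx dy 0 0 0"
  unfolding good_def sol_def by (rule exI[of _ "{}"]) auto



definition kc0 :: "(nat \<Rightarrow> nat \<Rightarrow> bool) \<Rightarrow> nat \<Rightarrow> nat \<Rightarrow> bool" where
  "kc0 G i j \<longleftrightarrow> good G i j False False 0 0 0 \<and> good G i j False True 0 0 0 \<and> good G i j False True 0 1 0 \<and> good G i j False True 1 0 0 \<and> good G i j False True 1 1 0 \<and> good G i j True False 0 0 0 \<and> good G i j True False 0 1 0 \<and> good G i j True False 1 0 0 \<and> good G i j True False 1 1 0 \<and> good G i j True True 0 0 0"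

definition kc1 :: "(nat \<Rightarrow> nat \<Rightarrow> bool) \<Rightarrow> nat \<Rightarrow> nat \<Rightarrow> bool" where
  "kc1 G i j \<longleftrightarrow> good G i j False True 0 0 1 \<and> good G i j False True 0 1 1 \<and> good G i j True True 0 0 1"

definition kc2 :: "(nat \<Rightarrow> nat \<Rightarrow> bool) \<Rightarrow> nat \<Rightarrow> nat \<Rightarrow> bool" where
  "kc2 G i j \<longleftrightarrow> good G i j True True 0 0 2"

definition kc3 :: "(nat \<Rightarrow> nat \<Rightarrow> bool) \<Rightarrow> nat \<Rightarrow> nat \<Rightarrow> bool" where
  "kc3 G i j \<longleftrightarrow> good G i j True False 0 0 1 \<and> good G i j True False 1 0 1 \<and> good G i j True True 0 0 1"

lemma good_leaf2: "k = Suc i \<Longrightarrow> good G i k dx dy 0 0 0"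
  using good_leaf by simp

lemma main_inv:
  assumes T: "tri n G"
  shows "G i j \<Longrightarrow> Suc i < j \<Longrightarrow> kc0 G i j \<or> kc1 G i j \<or> kc2 G i j \<or> kc3 G i j"
proof (induction "j - i" arbitrary: i j rule: less_induct)
  case less
  obtain k where k: "i < k" "k < j" "G i k" "G k j" using apex[OF T less.prems] by blast
  note Gij = less.prems(1)
  have IHL: "Suc i < k \<Longrightarrow> kc0 G i k \<or> kc1 G i k \<or> kc2 G i k \<or> kc3 G i k"
    by (rule less.hyps) (use k in auto)
  have IHR: "Suc k < j \<Longrightarrow> kc0 G k j \<or> kc1 G k j \<or> kc2 G k j \<or> kc3 G k j"
    by (rule less.hyps) (use k in auto)
  have CL: "k = Suc i \<or> Suc i < k" using k by linarith
  have CR: "j = Suc k \<or> Suc k < j" using k by linarith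
  have C_L_L: "kc2 G i j" if LC: "k = Suc i" and RC: "j = Suc k"
    unfolding kc2_def
  proof -
    have HL: "good G i k True False 0 0 0" using good_leaf2[OF LC] by simp
    have HR: "good G k j False True 0 0 0" using good_leaf2[of j k] RC by simp
    show "good G i j True True 0 0 2"
      by (rule good_comb[OF T k(1,2,3,4) Gij HL HR]) (use LC RC k in simp_all)
  qed
  have C_L_K0: "kc1 G i j" if LC: "k = Suc i" and RC: "Suc k < j" and R: "kc0 G k j"
    unfolding kc1_def
  proof (intro conjI)
    have HL: "good G i k False False 0 0 0" using good_leaf2[OF LC] by simp
    have HR: "good G k j False True 1 0 0" using R unfolding kc0_def by simp
    show "good G i j False True 0 0 1"
      by (rule good_comb[OF T k(1,2,3,4) Gij HL HR]) (use LC RC k in simp_all)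
    have HL: "good G i k False False 0 0 0" using good_leaf2[OF LC] by simp
    have HR: "good G k j False True 1 1 0" using R unfolding kc0_def by simp
    show "good G i j False True 0 1 1"
      by (rule good_comb[OF T k(1,2,3,4) Gij HL HR]) (use LC RC k in simp_all)
    have HL: "good G i k True False 0 0 0" using good_leaf2[OF LC] by simp
    have HR: "good G k j False True 0 0 0" using R unfolding kc0_def by simp
    show "good G i j True True 0 0 1"
      by (rule good_comb[OF T k(1,2,3,4) Gij HL HR]) (use LC RC k in simp_all)
  qed
  have C_L_K1: "kc2 G i j" if LC: "k = Suc i" and RC: "Suc k < j" and R: "kc1 G k j"
    unfolding kc2_def
  proof -
    have HL: "good G i k True False 0 0 0" using good_leaf2[OF LC] by simp
    have HR: "good G k j False True 0 0 1" using R unfolding kc1_def by simp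
    show "good G i j True True 0 0 2"
      by (rule good_comb[OF T k(1,2,3,4) Gij HL HR]) (use LC RC k in simp_all)
  qed
  have C_L_K2: "kc1 G i j" if LC: "k = Suc i" and RC: "Suc k < j" and R: "kc2 G k j"
    unfolding kc1_def
  proof (intro conjI)
    have HL: "good G i k False True 0 0 0" using good_leaf2[OF LC] by simp
    have HR: "good G k j True True 0 0 2" using R unfolding kc2_def by simp
    show "good G i j False True 0 0 1"
      by (rule good_comb[OF T k(1,2,3,4) Gij HL HR]) (use LC RC k in simp_all)
    have HL: "good G i k False True 0 0 0" using good_leaf2[OF LC] by simp
    have HR: "good G k j True True 0 0 2" using R unfolding kc2_def by simp
    show "good G i j False True 0 1 1"
      by (rule good_comb[OF T k(1,2,3,4) Gij HL HR]) (use LC RC k in simp_all)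
    have HL: "good G i k True True 0 0 0" using good_leaf2[OF LC] by simp
    have HR: "good G k j True True 0 0 2" using R unfolding kc2_def by simp
    show "good G i j True True 0 0 1"
      by (rule good_comb[OF T k(1,2,3,4) Gij HL HR]) (use LC RC k in simp_all)
  qed
  have C_L_K3: "kc0 G i j" if LC: "k = Suc i" and RC: "Suc k < j" and R: "kc3 G k j"
    unfolding kc0_def
  proof (intro conjI)
    have HL: "good G i k False True 0 0 0" using good_leaf2[OF LC] by simp
    have HR: "good G k j True False 1 0 1" using R unfolding kc3_def by simp
    show "good G i j False False 0 0 0"
      by (rule good_comb[OF T k(1,2,3,4) Gij HL HR]) (use LC RC k in simp_all)
    have HL: "good G i k False True 0 0 0" using good_leaf2[OF LC] by simp
    have HR: "good G k j True True 0 0 1" using R unfolding kc3_def by simp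
    show "good G i j False True 0 0 0"
      by (rule good_comb[OF T k(1,2,3,4) Gij HL HR]) (use LC RC k in simp_all)
    have HL: "good G i k False True 0 0 0" using good_leaf2[OF LC] by simp
    have HR: "good G k j True True 0 0 1" using R unfolding kc3_def by simp
    show "good G i j False True 0 1 0"
      by (rule good_comb[OF T k(1,2,3,4) Gij HL HR]) (use LC RC k in simp_all)
    have HL: "good G i k False True 0 0 0" using good_leaf2[OF LC] by simp
    have HR: "good G k j True True 0 0 1" using R unfolding kc3_def by simp
    show "good G i j False True 1 0 0"
      by (rule good_comb[OF T k(1,2,3,4) Gij HL HR]) (use LC RC k in simp_all)
    have HL: "good G i k False True 0 0 0" using good_leaf2[OF LC] by simp
    have HR: "good G k j True True 0 0 1" using R unfolding kc3_def by simp
    show "good G i j False True 1 1 0"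
      by (rule good_comb[OF T k(1,2,3,4) Gij HL HR]) (use LC RC k in simp_all)
    have HL: "good G i k True True 0 0 0" using good_leaf2[OF LC] by simp
    have HR: "good G k j True False 0 0 1" using R unfolding kc3_def by simp
    show "good G i j True False 0 0 0"
      by (rule good_comb[OF T k(1,2,3,4) Gij HL HR]) (use LC RC k in simp_all)
    have HL: "good G i k True True 0 0 0" using good_leaf2[OF LC] by simp
    have HR: "good G k j True False 0 0 1" using R unfolding kc3_def by simp
    show "good G i j True False 0 1 0"
      by (rule good_comb[OF T k(1,2,3,4) Gij HL HR]) (use LC RC k in simp_all)
    have HL: "good G i k True True 0 0 0" using good_leaf2[OF LC] by simp
    have HR: "good G k j True False 0 0 1" using R unfolding kc3_def by simp
    show "good G i j True False 1 0 0"
      by (rule good_comb[OF T k(1,2,3,4) Gij HL HR]) (use LC RC k in simp_all)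
    have HL: "good G i k True True 0 0 0" using good_leaf2[OF LC] by simp
    have HR: "good G k j True False 0 0 1" using R unfolding kc3_def by simp
    show "good G i j True False 1 1 0"
      by (rule good_comb[OF T k(1,2,3,4) Gij HL HR]) (use LC RC k in simp_all)
    have HL: "good G i k True True 0 0 0" using good_leaf2[OF LC] by simp
    have HR: "good G k j True True 0 0 1" using R unfolding kc3_def by simp
    show "good G i j True True 0 0 0"
      by (rule good_comb[OF T k(1,2,3,4) Gij HL HR]) (use LC RC k in simp_all)
  qed
  have C_K0_L: "kc3 G i j" if LC: "Suc i < k" and L: "kc0 G i k" and RC: "j = Suc k"
    unfolding kc3_def
  proof (intro conjI)
    have HL: "good G i k True False 0 1 0" using L unfolding kc0_def by simp
    have HR: "good G k j False False 0 0 0" using good_leaf2[of j k] RC by simp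
    show "good G i j True False 0 0 1"
      by (rule good_comb[OF T k(1,2,3,4) Gij HL HR]) (use LC RC k in simp_all)
    have HL: "good G i k True False 1 1 0" using L unfolding kc0_def by simp
    have HR: "good G k j False False 0 0 0" using good_leaf2[of j k] RC by simp
    show "good G i j True False 1 0 1"
      by (rule good_comb[OF T k(1,2,3,4) Gij HL HR]) (use LC RC k in simp_all)
    have HL: "good G i k True False 0 0 0" using L unfolding kc0_def by simp
    have HR: "good G k j False True 0 0 0" using good_leaf2[of j k] RC by simp
    show "good G i j True True 0 0 1"
      by (rule good_comb[OF T k(1,2,3,4) Gij HL HR]) (use LC RC k in simp_all)
  qed
  have C_K0_K0: "kc1 G i j" if LC: "Suc i < k" and L: "kc0 G i k" and RC: "Suc k < j" and R: "kc0 G k j"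
    unfolding kc1_def
  proof (intro conjI)
    have HL: "good G i k False False 0 0 0" using L unfolding kc0_def by simp
    have HR: "good G k j False True 1 0 0" using R unfolding kc0_def by simp
    show "good G i j False True 0 0 1"
      by (rule good_comb[OF T k(1,2,3,4) Gij HL HR]) (use LC RC k in simp_all)
    have HL: "good G i k False False 0 0 0" using L unfolding kc0_def by simp
    have HR: "good G k j False True 1 1 0" using R unfolding kc0_def by simp
    show "good G i j False True 0 1 1"
      by (rule good_comb[OF T k(1,2,3,4) Gij HL HR]) (use LC RC k in simp_all)
    have HL: "good G i k True False 0 0 0" using L unfolding kc0_def by simp
    have HR: "good G k j False True 0 0 0" using R unfolding kc0_def by simp
    show "good G i j True True 0 0 1"
      by (rule good_comb[OF T k(1,2,3,4) Gij HL HR]) (use LC RC k in simp_all)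
  qed
  have C_K0_K1: "kc2 G i j" if LC: "Suc i < k" and L: "kc0 G i k" and RC: "Suc k < j" and R: "kc1 G k j"
    unfolding kc2_def
  proof -
    have HL: "good G i k True False 0 0 0" using L unfolding kc0_def by simp
    have HR: "good G k j False True 0 0 1" using R unfolding kc1_def by simp
    show "good G i j True True 0 0 2"
      by (rule good_comb[OF T k(1,2,3,4) Gij HL HR]) (use LC RC k in simp_all)
  qed
  have C_K0_K2: "kc1 G i j" if LC: "Suc i < k" and L: "kc0 G i k" and RC: "Suc k < j" and R: "kc2 G k j"
    unfolding kc1_def
  proof (intro conjI)
    have HL: "good G i k False True 0 0 0" using L unfolding kc0_def by simp
    have HR: "good G k j True True 0 0 2" using R unfolding kc2_def by simp
    show "good G i j False True 0 0 1"
      by (rule good_comb[OF T k(1,2,3,4) Gij HL HR]) (use LC RC k in simp_all)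
    have HL: "good G i k False True 0 0 0" using L unfolding kc0_def by simp
    have HR: "good G k j True True 0 0 2" using R unfolding kc2_def by simp
    show "good G i j False True 0 1 1"
      by (rule good_comb[OF T k(1,2,3,4) Gij HL HR]) (use LC RC k in simp_all)
    have HL: "good G i k True True 0 0 0" using L unfolding kc0_def by simp
    have HR: "good G k j True True 0 0 2" using R unfolding kc2_def by simp
    show "good G i j True True 0 0 1"
      by (rule good_comb[OF T k(1,2,3,4) Gij HL HR]) (use LC RC k in simp_all)
  qed
  have C_K0_K3: "kc0 G i j" if LC: "Suc i < k" and L: "kc0 G i k" and RC: "Suc k < j" and R: "kc3 G k j"
    unfolding kc0_def
  proof (intro conjI)
    have HL: "good G i k False True 0 0 0" using L unfolding kc0_def by simp
    have HR: "good G k j True False 1 0 1" using R unfolding kc3_def by simp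
    show "good G i j False False 0 0 0"
      by (rule good_comb[OF T k(1,2,3,4) Gij HL HR]) (use LC RC k in simp_all)
    have HL: "good G i k False True 0 0 0" using L unfolding kc0_def by simp
    have HR: "good G k j True True 0 0 1" using R unfolding kc3_def by simp
    show "good G i j False True 0 0 0"
      by (rule good_comb[OF T k(1,2,3,4) Gij HL HR]) (use LC RC k in simp_all)
    have HL: "good G i k False True 0 0 0" using L unfolding kc0_def by simp
    have HR: "good G k j True True 0 0 1" using R unfolding kc3_def by simp
    show "good G i j False True 0 1 0"
      by (rule good_comb[OF T k(1,2,3,4) Gij HL HR]) (use LC RC k in simp_all)
    have HL: "good G i k False True 0 0 0" using L unfolding kc0_def by simp
    have HR: "good G k j True True 0 0 1" using R unfolding kc3_def by simp
    show "good G i j False True 1 0 0"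
      by (rule good_comb[OF T k(1,2,3,4) Gij HL HR]) (use LC RC k in simp_all)
    have HL: "good G i k False True 0 0 0" using L unfolding kc0_def by simp
    have HR: "good G k j True True 0 0 1" using R unfolding kc3_def by simp
    show "good G i j False True 1 1 0"
      by (rule good_comb[OF T k(1,2,3,4) Gij HL HR]) (use LC RC k in simp_all)
    have HL: "good G i k True True 0 0 0" using L unfolding kc0_def by simp
    have HR: "good G k j True False 0 0 1" using R unfolding kc3_def by simp
    show "good G i j True False 0 0 0"
      by (rule good_comb[OF T k(1,2,3,4) Gij HL HR]) (use LC RC k in simp_all)
    have HL: "good G i k True True 0 0 0" using L unfolding kc0_def by simp
    have HR: "good G k j True False 0 0 1" using R unfolding kc3_def by simp
    show "good G i j True False 0 1 0"
      by (rule good_comb[OF T k(1,2,3,4) Gij HL HR]) (use LC RC k in simp_all)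
    have HL: "good G i k True True 0 0 0" using L unfolding kc0_def by simp
    have HR: "good G k j True False 0 0 1" using R unfolding kc3_def by simp
    show "good G i j True False 1 0 0"
      by (rule good_comb[OF T k(1,2,3,4) Gij HL HR]) (use LC RC k in simp_all)
    have HL: "good G i k True True 0 0 0" using L unfolding kc0_def by simp
    have HR: "good G k j True False 0 0 1" using R unfolding kc3_def by simp
    show "good G i j True False 1 1 0"
      by (rule good_comb[OF T k(1,2,3,4) Gij HL HR]) (use LC RC k in simp_all)
    have HL: "good G i k True True 0 0 0" using L unfolding kc0_def by simp
    have HR: "good G k j True True 0 0 1" using R unfolding kc3_def by simp
    show "good G i j True True 0 0 0"
      by (rule good_comb[OF T k(1,2,3,4) Gij HL HR]) (use LC RC k in simp_all)
  qed
  have C_K1_L: "kc0 G i j" if LC: "Suc i < k" and L: "kc1 G i k" and RC: "j = Suc k"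
    unfolding kc0_def
  proof (intro conjI)
    have HL: "good G i k False True 0 1 1" using L unfolding kc1_def by simp
    have HR: "good G k j True False 0 0 0" using good_leaf2[of j k] RC by simp
    show "good G i j False False 0 0 0"
      by (rule good_comb[OF T k(1,2,3,4) Gij HL HR]) (use LC RC k in simp_all)
    have HL: "good G i k False True 0 0 1" using L unfolding kc1_def by simp
    have HR: "good G k j True True 0 0 0" using good_leaf2[of j k] RC by simp
    show "good G i j False True 0 0 0"
      by (rule good_comb[OF T k(1,2,3,4) Gij HL HR]) (use LC RC k in simp_all)
    have HL: "good G i k False True 0 0 1" using L unfolding kc1_def by simp
    have HR: "good G k j True True 0 0 0" using good_leaf2[of j k] RC by simp
    show "good G i j False True 0 1 0"
      by (rule good_comb[OF T k(1,2,3,4) Gij HL HR]) (use LC RC k in simp_all)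
    have HL: "good G i k False True 0 0 1" using L unfolding kc1_def by simp
    have HR: "good G k j True True 0 0 0" using good_leaf2[of j k] RC by simp
    show "good G i j False True 1 0 0"
      by (rule good_comb[OF T k(1,2,3,4) Gij HL HR]) (use LC RC k in simp_all)
    have HL: "good G i k False True 0 0 1" using L unfolding kc1_def by simp
    have HR: "good G k j True True 0 0 0" using good_leaf2[of j k] RC by simp
    show "good G i j False True 1 1 0"
      by (rule good_comb[OF T k(1,2,3,4) Gij HL HR]) (use LC RC k in simp_all)
    have HL: "good G i k True True 0 0 1" using L unfolding kc1_def by simp
    have HR: "good G k j True False 0 0 0" using good_leaf2[of j k] RC by simp
    show "good G i j True False 0 0 0"
      by (rule good_comb[OF T k(1,2,3,4) Gij HL HR]) (use LC RC k in simp_all)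
    have HL: "good G i k True True 0 0 1" using L unfolding kc1_def by simp
    have HR: "good G k j True False 0 0 0" using good_leaf2[of j k] RC by simp
    show "good G i j True False 0 1 0"
      by (rule good_comb[OF T k(1,2,3,4) Gij HL HR]) (use LC RC k in simp_all)
    have HL: "good G i k True True 0 0 1" using L unfolding kc1_def by simp
    have HR: "good G k j True False 0 0 0" using good_leaf2[of j k] RC by simp
    show "good G i j True False 1 0 0"
      by (rule good_comb[OF T k(1,2,3,4) Gij HL HR]) (use LC RC k in simp_all)
    have HL: "good G i k True True 0 0 1" using L unfolding kc1_def by simp
    have HR: "good G k j True False 0 0 0" using good_leaf2[of j k] RC by simp
    show "good G i j True False 1 1 0"
      by (rule good_comb[OF T k(1,2,3,4) Gij HL HR]) (use LC RC k in simp_all)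
    have HL: "good G i k True True 0 0 1" using L unfolding kc1_def by simp
    have HR: "good G k j True True 0 0 0" using good_leaf2[of j k] RC by simp
    show "good G i j True True 0 0 0"
      by (rule good_comb[OF T k(1,2,3,4) Gij HL HR]) (use LC RC k in simp_all)
  qed
  have C_K1_K0: "kc0 G i j" if LC: "Suc i < k" and L: "kc1 G i k" and RC: "Suc k < j" and R: "kc0 G k j"
    unfolding kc0_def
  proof (intro conjI)
    have HL: "good G i k False True 0 0 1" using L unfolding kc1_def by simp
    have HR: "good G k j True False 1 0 0" using R unfolding kc0_def by simp
    show "good G i j False False 0 0 0"
      by (rule good_comb[OF T k(1,2,3,4) Gij HL HR]) (use LC RC k in simp_all)
    have HL: "good G i k False True 0 0 1" using L unfolding kc1_def by simp
    have HR: "good G k j True True 0 0 0" using R unfolding kc0_def by simp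
    show "good G i j False True 0 0 0"
      by (rule good_comb[OF T k(1,2,3,4) Gij HL HR]) (use LC RC k in simp_all)
    have HL: "good G i k False True 0 0 1" using L unfolding kc1_def by simp
    have HR: "good G k j True True 0 0 0" using R unfolding kc0_def by simp
    show "good G i j False True 0 1 0"
      by (rule good_comb[OF T k(1,2,3,4) Gij HL HR]) (use LC RC k in simp_all)
    have HL: "good G i k False True 0 0 1" using L unfolding kc1_def by simp
    have HR: "good G k j True True 0 0 0" using R unfolding kc0_def by simp
    show "good G i j False True 1 0 0"
      by (rule good_comb[OF T k(1,2,3,4) Gij HL HR]) (use LC RC k in simp_all)
    have HL: "good G i k False True 0 0 1" using L unfolding kc1_def by simp
    have HR: "good G k j True True 0 0 0" using R unfolding kc0_def by simp
    show "good G i j False True 1 1 0"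
      by (rule good_comb[OF T k(1,2,3,4) Gij HL HR]) (use LC RC k in simp_all)
    have HL: "good G i k True True 0 0 1" using L unfolding kc1_def by simp
    have HR: "good G k j True False 0 0 0" using R unfolding kc0_def by simp
    show "good G i j True False 0 0 0"
      by (rule good_comb[OF T k(1,2,3,4) Gij HL HR]) (use LC RC k in simp_all)
    have HL: "good G i k True True 0 0 1" using L unfolding kc1_def by simp
    have HR: "good G k j True False 0 0 0" using R unfolding kc0_def by simp
    show "good G i j True False 0 1 0"
      by (rule good_comb[OF T k(1,2,3,4) Gij HL HR]) (use LC RC k in simp_all)
    have HL: "good G i k True True 0 0 1" using L unfolding kc1_def by simp
    have HR: "good G k j True False 0 0 0" using R unfolding kc0_def by simp
    show "good G i j True False 1 0 0"
      by (rule good_comb[OF T k(1,2,3,4) Gij HL HR]) (use LC RC k in simp_all)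
    have HL: "good G i k True True 0 0 1" using L unfolding kc1_def by simp
    have HR: "good G k j True False 0 0 0" using R unfolding kc0_def by simp
    show "good G i j True False 1 1 0"
      by (rule good_comb[OF T k(1,2,3,4) Gij HL HR]) (use LC RC k in simp_all)
    have HL: "good G i k True True 0 0 1" using L unfolding kc1_def by simp
    have HR: "good G k j True True 0 0 0" using R unfolding kc0_def by simp
    show "good G i j True True 0 0 0"
      by (rule good_comb[OF T k(1,2,3,4) Gij HL HR]) (use LC RC k in simp_all)
  qed
  have C_K1_K1: "kc1 G i j" if LC: "Suc i < k" and L: "kc1 G i k" and RC: "Suc k < j" and R: "kc1 G k j"
    unfolding kc1_def
  proof (intro conjI)
    have HL: "good G i k False True 0 0 1" using L unfolding kc1_def by simp
    have HR: "good G k j True True 0 0 1" using R unfolding kc1_def by simp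
    show "good G i j False True 0 0 1"
      by (rule good_comb[OF T k(1,2,3,4) Gij HL HR]) (use LC RC k in simp_all)
    have HL: "good G i k False True 0 0 1" using L unfolding kc1_def by simp
    have HR: "good G k j True True 0 0 1" using R unfolding kc1_def by simp
    show "good G i j False True 0 1 1"
      by (rule good_comb[OF T k(1,2,3,4) Gij HL HR]) (use LC RC k in simp_all)
    have HL: "good G i k True True 0 0 1" using L unfolding kc1_def by simp
    have HR: "good G k j True True 0 0 1" using R unfolding kc1_def by simp
    show "good G i j True True 0 0 1"
      by (rule good_comb[OF T k(1,2,3,4) Gij HL HR]) (use LC RC k in simp_all)
  qed
  have C_K1_K2: "kc2 G i j" if LC: "Suc i < k" and L: "kc1 G i k" and RC: "Suc k < j" and R: "kc2 G k j"
    unfolding kc2_def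
  proof -
    have HL: "good G i k True True 0 0 1" using L unfolding kc1_def by simp
    have HR: "good G k j True True 0 0 2" using R unfolding kc2_def by simp
    show "good G i j True True 0 0 2"
      by (rule good_comb[OF T k(1,2,3,4) Gij HL HR]) (use LC RC k in simp_all)
  qed
  have C_K1_K3: "kc1 G i j" if LC: "Suc i < k" and L: "kc1 G i k" and RC: "Suc k < j" and R: "kc3 G k j"
    unfolding kc1_def
  proof (intro conjI)
    have HL: "good G i k False True 0 0 1" using L unfolding kc1_def by simp
    have HR: "good G k j True True 0 0 1" using R unfolding kc3_def by simp
    show "good G i j False True 0 0 1"
      by (rule good_comb[OF T k(1,2,3,4) Gij HL HR]) (use LC RC k in simp_all)
    have HL: "good G i k False True 0 0 1" using L unfolding kc1_def by simp
    have HR: "good G k j True True 0 0 1" using R unfolding kc3_def by simp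
    show "good G i j False True 0 1 1"
      by (rule good_comb[OF T k(1,2,3,4) Gij HL HR]) (use LC RC k in simp_all)
    have HL: "good G i k True True 0 0 1" using L unfolding kc1_def by simp
    have HR: "good G k j True True 0 0 1" using R unfolding kc3_def by simp
    show "good G i j True True 0 0 1"
      by (rule good_comb[OF T k(1,2,3,4) Gij HL HR]) (use LC RC k in simp_all)
  qed
  have C_K2_L: "kc3 G i j" if LC: "Suc i < k" and L: "kc2 G i k" and RC: "j = Suc k"
    unfolding kc3_def
  proof (intro conjI)
    have HL: "good G i k True True 0 0 2" using L unfolding kc2_def by simp
    have HR: "good G k j True False 0 0 0" using good_leaf2[of j k] RC by simp
    show "good G i j True False 0 0 1"
      by (rule good_comb[OF T k(1,2,3,4) Gij HL HR]) (use LC RC k in simp_all)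
    have HL: "good G i k True True 0 0 2" using L unfolding kc2_def by simp
    have HR: "good G k j True False 0 0 0" using good_leaf2[of j k] RC by simp
    show "good G i j True False 1 0 1"
      by (rule good_comb[OF T k(1,2,3,4) Gij HL HR]) (use LC RC k in simp_all)
    have HL: "good G i k True True 0 0 2" using L unfolding kc2_def by simp
    have HR: "good G k j True True 0 0 0" using good_leaf2[of j k] RC by simp
    show "good G i j True True 0 0 1"
      by (rule good_comb[OF T k(1,2,3,4) Gij HL HR]) (use LC RC k in simp_all)
  qed
  have C_K2_K0: "kc3 G i j" if LC: "Suc i < k" and L: "kc2 G i k" and RC: "Suc k < j" and R: "kc0 G k j"
    unfolding kc3_def
  proof (intro conjI)
    have HL: "good G i k True True 0 0 2" using L unfolding kc2_def by simp
    have HR: "good G k j True False 0 0 0" using R unfolding kc0_def by simp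
    show "good G i j True False 0 0 1"
      by (rule good_comb[OF T k(1,2,3,4) Gij HL HR]) (use LC RC k in simp_all)
    have HL: "good G i k True True 0 0 2" using L unfolding kc2_def by simp
    have HR: "good G k j True False 0 0 0" using R unfolding kc0_def by simp
    show "good G i j True False 1 0 1"
      by (rule good_comb[OF T k(1,2,3,4) Gij HL HR]) (use LC RC k in simp_all)
    have HL: "good G i k True True 0 0 2" using L unfolding kc2_def by simp
    have HR: "good G k j True True 0 0 0" using R unfolding kc0_def by simp
    show "good G i j True True 0 0 1"
      by (rule good_comb[OF T k(1,2,3,4) Gij HL HR]) (use LC RC k in simp_all)
  qed
  have C_K2_K1: "kc2 G i j" if LC: "Suc i < k" and L: "kc2 G i k" and RC: "Suc k < j" and R: "kc1 G k j"
    unfolding kc2_def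
  proof -
    have HL: "good G i k True True 0 0 2" using L unfolding kc2_def by simp
    have HR: "good G k j True True 0 0 1" using R unfolding kc1_def by simp
    show "good G i j True True 0 0 2"
      by (rule good_comb[OF T k(1,2,3,4) Gij HL HR]) (use LC RC k in simp_all)
  qed
  have C_K2_K2: "kc2 G i j" if LC: "Suc i < k" and L: "kc2 G i k" and RC: "Suc k < j" and R: "kc2 G k j"
    unfolding kc2_def
  proof -
    have HL: "good G i k True True 0 0 2" using L unfolding kc2_def by simp
    have HR: "good G k j True True 0 0 2" using R unfolding kc2_def by simp
    show "good G i j True True 0 0 2"
      by (rule good_comb[OF T k(1,2,3,4) Gij HL HR]) (use LC RC k in simp_all)
  qed
  have C_K2_K3: "kc2 G i j" if LC: "Suc i < k" and L: "kc2 G i k" and RC: "Suc k < j" and R: "kc3 G k j"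
    unfolding kc2_def
  proof -
    have HL: "good G i k True True 0 0 2" using L unfolding kc2_def by simp
    have HR: "good G k j True True 0 0 1" using R unfolding kc3_def by simp
    show "good G i j True True 0 0 2"
      by (rule good_comb[OF T k(1,2,3,4) Gij HL HR]) (use LC RC k in simp_all)
  qed
  have C_K3_L: "kc2 G i j" if LC: "Suc i < k" and L: "kc3 G i k" and RC: "j = Suc k"
    unfolding kc2_def
  proof -
    have HL: "good G i k True False 0 0 1" using L unfolding kc3_def by simp
    have HR: "good G k j False True 0 0 0" using good_leaf2[of j k] RC by simp
    show "good G i j True True 0 0 2"
      by (rule good_comb[OF T k(1,2,3,4) Gij HL HR]) (use LC RC k in simp_all)
  qed
  have C_K3_K0: "kc2 G i j" if LC: "Suc i < k" and L: "kc3 G i k" and RC: "Suc k < j" and R: "kc0 G k j"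
    unfolding kc2_def
  proof -
    have HL: "good G i k True False 0 0 1" using L unfolding kc3_def by simp
    have HR: "good G k j False True 0 0 0" using R unfolding kc0_def by simp
    show "good G i j True True 0 0 2"
      by (rule good_comb[OF T k(1,2,3,4) Gij HL HR]) (use LC RC k in simp_all)
  qed
  have C_K3_K1: "kc2 G i j" if LC: "Suc i < k" and L: "kc3 G i k" and RC: "Suc k < j" and R: "kc1 G k j"
    unfolding kc2_def
  proof -
    have HL: "good G i k True False 0 0 1" using L unfolding kc3_def by simp
    have HR: "good G k j False True 0 0 1" using R unfolding kc1_def by simp
    show "good G i j True True 0 0 2"
      by (rule good_comb[OF T k(1,2,3,4) Gij HL HR]) (use LC RC k in simp_all)
  qed
  have C_K3_K2: "kc2 G i j" if LC: "Suc i < k" and L: "kc3 G i k" and RC: "Suc k < j" and R: "kc2 G k j"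
    unfolding kc2_def
  proof -
    have HL: "good G i k True True 0 0 1" using L unfolding kc3_def by simp
    have HR: "good G k j True True 0 0 2" using R unfolding kc2_def by simp
    show "good G i j True True 0 0 2"
      by (rule good_comb[OF T k(1,2,3,4) Gij HL HR]) (use LC RC k in simp_all)
  qed
  have C_K3_K3: "kc3 G i j" if LC: "Suc i < k" and L: "kc3 G i k" and RC: "Suc k < j" and R: "kc3 G k j"
    unfolding kc3_def
  proof (intro conjI)
    have HL: "good G i k True True 0 0 1" using L unfolding kc3_def by simp
    have HR: "good G k j True False 0 0 1" using R unfolding kc3_def by simp
    show "good G i j True False 0 0 1"
      by (rule good_comb[OF T k(1,2,3,4) Gij HL HR]) (use LC RC k in simp_all)
    have HL: "good G i k True True 0 0 1" using L unfolding kc3_def by simp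
    have HR: "good G k j True False 0 0 1" using R unfolding kc3_def by simp
    show "good G i j True False 1 0 1"
      by (rule good_comb[OF T k(1,2,3,4) Gij HL HR]) (use LC RC k in simp_all)
    have HL: "good G i k True True 0 0 1" using L unfolding kc3_def by simp
    have HR: "good G k j True True 0 0 1" using R unfolding kc3_def by simp
    show "good G i j True True 0 0 1"
      by (rule good_comb[OF T k(1,2,3,4) Gij HL HR]) (use LC RC k in simp_all)
  qed
  show ?case
    using CL CR
  proof (elim disjE)
    assume lc: "k = Suc i" and rc: "j = Suc k"
    show ?thesis using C_L_L[OF lc rc] by simp
  next
    assume lc: "k = Suc i" and rc: "Suc k < j"
    have hr: "kc0 G k j \<or> kc1 G k j \<or> kc2 G k j \<or> kc3 G k j" using IHR rc by simp
    show ?thesis using hr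
      by (elim disjE) (auto dest: C_L_K0[OF lc rc] C_L_K1[OF lc rc] C_L_K2[OF lc rc] C_L_K3[OF lc rc])
  next
    assume lc: "Suc i < k" and rc: "j = Suc k"
    have hl: "kc0 G i k \<or> kc1 G i k \<or> kc2 G i k \<or> kc3 G i k" using IHL lc by simp
    show ?thesis using hl
      by (elim disjE) (auto dest: C_K0_L[OF lc _ rc] C_K1_L[OF lc _ rc] C_K2_L[OF lc _ rc] C_K3_L[OF lc _ rc])
  next
    assume lc: "Suc i < k" and rc: "Suc k < j"
    have hl: "kc0 G i k \<or> kc1 G i k \<or> kc2 G i k \<or> kc3 G i k" using IHL lc by simp
    have hr: "kc0 G k j \<or> kc1 G k j \<or> kc2 G k j \<or> kc3 G k j" using IHR rc by simp
    show ?thesis using hl hr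
      by (elim disjE) (auto dest: C_K0_K0[OF lc _ rc] C_K0_K1[OF lc _ rc] C_K0_K2[OF lc _ rc] C_K0_K3[OF lc _ rc] C_K1_K0[OF lc _ rc] C_K1_K1[OF lc _ rc] C_K1_K2[OF lc _ rc] C_K1_K3[OF lc _ rc] C_K2_K0[OF lc _ rc] C_K2_K1[OF lc _ rc] C_K2_K2[OF lc _ rc] C_K2_K3[OF lc _ rc] C_K3_K0[OF lc _ rc] C_K3_K1[OF lc _ rc] C_K3_K2[OF lc _ rc] C_K3_K3[OF lc _ rc])
  qed
qed



definition ddp :: "nat \<Rightarrow> (nat \<Rightarrow> nat \<Rightarrow> bool) \<Rightarrow> nat set \<Rightarrow> bool" where
  "ddp n G D \<longleftrightarrow> D \<subseteq> {..<n} \<and> (\<forall>v<n. 2 \<le> card {u \<in> D. u = v \<or> G v u})"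

definition ntd :: "nat \<Rightarrow> (nat \<Rightarrow> nat \<Rightarrow> bool) \<Rightarrow> nat" where
  "ntd n G = card {v. v < n \<and> deg G v = 2}"

lemma good_weaken: "good G i j dx dy rx ry c \<Longrightarrow> good G i j dx dy rx ry 0"
  unfolding good_def by auto

lemma main_TT:
  assumes T: "tri n G" and "G i j" "Suc i < j"
  shows "good G i j True True 0 0 0"
  using main_inv[OF T assms(2,3)] unfolding kc0_def kc1_def kc2_def kc3_def
  using good_weaken by blast

lemma card2: "finite S \<Longrightarrow> a \<in> S \<Longrightarrow> b \<in> S \<Longrightarrow> a \<noteq> b \<Longrightarrow> 2 \<le> card S"
  using card_mono[of S "{a, b}"] by auto

lemma card3: "finite S \<Longrightarrow> a \<in> S \<Longrightarrow> b \<in> S \<Longrightarrow> c \<in> S \<Longrightarrow> a \<noteq> b \<Longrightarrow> a \<noteq> c \<Longrightarrow> b \<noteq> c \<Longrightarrow> 3 \<le> card S"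
  using card_mono[of S "{a, b, c}"] by auto

context
  fixes n :: nat and G :: "nat \<Rightarrow> nat \<Rightarrow> bool"
  assumes T: "tri n G"
begin

lemma ear_facts:
  assumes n4: "4 \<le> n" and d0: "deg G 0 = 2"
  shows "{u. G 0 u} = {1, n - 1} \<and> G 1 (n - 1) \<and> deg G 1 \<noteq> 2 \<and> deg G (n - 1) \<noteq> 2"
proof -
  have g01: "G 0 1" using boundary[OF T, of 0] n4 by simp
  have g0n: "G 0 (n - 1)" using wrap[OF T] n4 by simp
  have sub: "{1, n - 1} \<subseteq> {u. G 0 u}" using g01 g0n by auto
  have c2: "card {1, n - 1} = 2" using n4 by simp
  have nb: "{u. G 0 u} = {1, n - 1}"
    using card_subset_eq[OF nbr_fin[OF T] sub] c2 d0 unfolding deg_def by simp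
  have g1n: "G 1 (n - 1)"
  proof (rule ccontr)
    assume "\<not> G 1 (n - 1)"
    then have "\<exists>a b. G a b \<and> chords_cross 1 (n - 1) a b" using n4 by (intro maxl[OF T]) auto
    then obtain a b where ab: "G a b" "chords_cross 1 (n - 1) a b" by blast
    then have a: "1 < a" "a < n - 1" and "b < 1 \<or> n - 1 < b" unfolding chords_cross_def using n4 by auto
    then have "b = 0" using Gbnd[OF T ab(1)] by auto
    then have "a \<in> {u. G 0 u}" using Gsym[OF T ab(1)] by simp
    then show False using nb a by auto
  qed
  have a2: "G 1 2" using boundary[OF T, of 1] n4 by (simp add: numeral_2_eq_2)
  have sn: "Suc (n - 2) = n - 1" using n4 by simp
  have "G (n - 2) (Suc (n - 2))" using boundary[OF T, of "n - 2"] n4 by simp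
  then have a3: "G (n - 1) (n - 2)" using Gsym[OF T] sn by simp
  have "3 \<le> deg G 1"
    unfolding deg_def
    by (rule card3[of "{u. G 1 u}" 0 2 "n - 1"]) (use nbr_fin[OF T] Gsym[OF T g01] a2 g1n n4 in auto)
  moreover have "3 \<le> deg G (n - 1)"
    unfolding deg_def
    by (rule card3[of "{u. G (n - 1) u}" 0 "n - 2" 1]) (use nbr_fin[OF T] Gsym[OF T g0n] a3 Gsym[OF T g1n] n4 in auto)
  ultimately show ?thesis using nb g1n by simp
qed

lemma top_ear0:
  assumes n4: "4 \<le> n" and d0: "deg G 0 = 2"
  shows "\<exists>D. ddp n G D \<and> 2 * card D \<le> n + ntd n G"
proof -
  have EF: "{u. G 0 u} = {1, n - 1}" "G 1 (n - 1)" using ear_facts[OF n4 d0] by auto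
  have "good G 1 (n - 1) True True 0 0 0" using main_TT[OF T EF(2)] n4 by simp
  then obtain D0 where D0: "sol G 1 (n - 1) True True 0 0 D0" "2 * card D0 \<le> (n - 1 - 1 - 1) + tau G 1 (n - 1)"
    unfolding good_def by auto
  have sD0: "D0 \<subseteq> {1<..<n - 1}" using D0(1) unfolding sol_def by auto
  have fD0: "finite D0" using sol_fin[OF T D0(1)] .
  define D where "D = D0 \<union> {1, n - 1}"
  have fD: "finite D" unfolding D_def using fD0 by simp
  have nin: "1 \<notin> D0" "n - 1 \<notin> D0" using sD0 by auto
  have cD: "card D = card D0 + 2" unfolding D_def
    using fD0 nin n4 by simp
  have bs: "bset 1 (n - 1) True True = {1, n - 1}" unfolding bset_def by auto
  have dd: "ddp n G D" unfolding ddp_def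
  proof (intro conjI allI impI)
    show "D \<subseteq> {..<n}" unfolding D_def using sD0 n4 by fastforce
    fix v assume v: "v < n"
    have fS: "finite {u \<in> D. u = v \<or> G v u}" using fD by simp
    consider "v = 0" | "v = 1" | "v = n - 1" | "1 < v \<and> v < n - 1" using v by linarith
    then show "2 \<le> card {u \<in> D. u = v \<or> G v u}"
    proof cases
      case 1
      then show ?thesis apply - apply (rule card2[OF fS, of 1 "n - 1"]) using EF n4 unfolding D_def by auto
    next
      case 2
      then show ?thesis apply - apply (rule card2[OF fS, of 1 "n - 1"]) using EF n4 unfolding D_def by auto
    next
      case 3
      then show ?thesis apply - apply (rule card2[OF fS, of 1 "n - 1"]) using EF Gsym[OF T] n4 unfolding D_def by auto
    next
      case 4
      then have "2 \<le> card {u \<in> D0 \<union> bset 1 (n - 1) True True. u = v \<or> G v u}"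
        using D0(1) unfolding sol_def by blast
      then show ?thesis unfolding bs D_def .
    qed
  qed
  have ft: "finite {v. v < n \<and> deg G v = 2}" by simp
  have "{v. 1 < v \<and> v < n - 1 \<and> deg G v = 2} \<union> {0} \<subseteq> {v. v < n \<and> deg G v = 2}" using d0 n4 by auto
  then have "card ({v. 1 < v \<and> v < n - 1 \<and> deg G v = 2} \<union> {0}) \<le> ntd n G"
    unfolding ntd_def using card_mono[OF ft] by blast
  moreover have "card ({v. 1 < v \<and> v < n - 1 \<and> deg G v = 2} \<union> {0}) = tau G 1 (n - 1) + 1"
    unfolding tau_def
    apply (subst card_Un_disjoint) apply (rule finite_subset[of _ "{..<n}"]) by auto
  ultimately have "tau G 1 (n - 1) + 1 \<le> ntd n G" by simp
  then have "2 * card D \<le> n + ntd n G" using cD D0(2) n4 by simp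
  then show ?thesis using dd by blast
qed

lemma ear_exists:
  assumes n3: "3 \<le> n"
  shows "\<exists>p<n. deg G p = 2"
proof -
  define P where "P = (\<lambda>m. \<exists>i j. G i j \<and> Suc i < j \<and> j - i = m)"
  have "P (n - 1 - 0)" unfolding P_def using wrap[OF T] n3 by (intro exI[of _ 0] exI[of _ "n - 1"]) auto
  then obtain m where Pm: "P m" and mmin: "\<And>m'. P m' \<Longrightarrow> m \<le> m'"
    using ex_has_least_nat[of P "n - 1" "\<lambda>x. x"] by auto
  obtain i j where ij: "G i j" "Suc i < j" "j - i = m" using Pm unfolding P_def by auto
  obtain k where k: "i < k" "k < j" "G i k" "G k j" using apex[OF T ij(1,2)] by auto
  have "k = Suc i"
  proof (rule ccontr)
    assume ne: "k \<noteq> Suc i"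
    have "P (k - i)" unfolding P_def by (rule exI[of _ i], rule exI[of _ k]) (use k ne in auto)
    then show False using mmin[of "k - i"] ij k by auto
  qed
  moreover have "j = Suc k"
  proof (rule ccontr)
    assume ne: "j \<noteq> Suc k"
    have "P (j - k)" unfolding P_def by (rule exI[of _ k], rule exI[of _ j]) (use k ne in auto)
    then show False using mmin[of "j - k"] ij k by auto
  qed
  ultimately have "deg G k = 2" using apex_deg2[OF T k(3,4) ij(1) k(1,2)] by simp
  moreover have "k < n" using Gbnd[OF T k(4)] by simp
  ultimately show ?thesis by blast
qed

end




definition rotG :: "nat \<Rightarrow> nat \<Rightarrow> (nat \<Rightarrow> nat \<Rightarrow> bool) \<Rightarrow> nat \<Rightarrow> nat \<Rightarrow> bool" where
  "rotG n c G p q \<longleftrightarrow> p < n \<and> q < n \<and> G ((p + c) mod n) ((q + c) mod n)"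

lemma rot_back:
  fixes x n c :: nat
  assumes "x < n" "c < n" "0 < c"
  shows "((x + c) mod n + (n - c)) mod n = x"
proof -
  have "((x + c) mod n + (n - c)) mod n = ((x + c) + (n - c)) mod n" by (simp add: mod_add_left_eq)
  also have "(x + c) + (n - c) = x + n" using assms by simp
  finally show ?thesis using assms by simp
qed

lemma cross_rot2:
  assumes "x < n" "y < n" "z < n" "w < n" "c < n"
    and "chords_cross x y z w"
  shows "chords_cross ((x + c) mod n) ((y + c) mod n) ((z + c) mod n) ((w + c) mod n) \<or>
         chords_cross ((x + c) mod n) ((y + c) mod n) ((w + c) mod n) ((z + c) mod n)"
proof (cases "c = 0")
  case True
  then show ?thesis using assms by simp
next
  case False
  have b: "(x + c) mod n < n" "(y + c) mod n < n" "(z + c) mod n < n" "(w + c) mod n < n" "n - c < n"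
    using assms False by auto
  have pos: "0 < c" using False by simp
    show ?thesis
    apply (rule cross_rot[OF b])
    unfolding rot_back[OF assms(1,5) pos] rot_back[OF assms(2,5) pos] rot_back[OF assms(3,5) pos] rot_back[OF assms(4,5) pos]
    using assms(6) by simp
qed

lemma r_inj: fixes c n :: nat assumes "c < n" shows "inj_on (\<lambda>x. (x + c) mod n) {..<n}"
proof (rule inj_onI)
  fix x y assume xy: "x \<in> {..<n}" "y \<in> {..<n}" "(x + c) mod n = (y + c) mod n"
  then show "x = y" using rot_mod[of x n c] rot_mod[of y n c] assms by (auto split: if_splits)
qed

lemma r_img: fixes c n :: nat assumes "c < n" shows "(\<lambda>x. (x + c) mod n) ` {..<n} = {..<n}"
proof (rule endo_inj_surj)
  show "finite {..<n}" by simp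
  show "(\<lambda>x. (x + c) mod n) ` {..<n} \<subseteq> {..<n}" using assms by auto
  show "inj_on (\<lambda>x. (x + c) mod n) {..<n}" using r_inj[OF assms] .
qed

lemma r_surj: fixes c n u :: nat assumes "c < n" "u < n" obtains u' where "u' < n" "u = (u' + c) mod n"
proof -
  have "u \<in> (\<lambda>x. (x + c) mod n) ` {..<n}" using r_img[OF assms(1)] assms(2) by simp
  then obtain u' where "u' \<in> {..<n}" "u = (u' + c) mod n" by blast
  then show ?thesis using that by simp
qed




context
  fixes n :: nat and G :: "nat \<Rightarrow> nat \<Rightarrow> bool" and c :: nat
  assumes T: "tri n G" and cn: "c < n"
begin

lemma rot_tri: "tri n (rotG n c G)"
proof -
  have c1: "\<forall>p q. rotG n c G p q \<longrightarrow> p < n \<and> q < n \<and> p \<noteq> q \<and> rotG n c G q p"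
  proof (intro allI impI)
    fix p q assume a: "rotG n c G p q"
    then have g: "G ((p + c) mod n) ((q + c) mod n)" and pq: "p < n" "q < n" unfolding rotG_def by auto
    have "p \<noteq> q" using Girr[OF T g] by auto
    moreover have "rotG n c G q p" unfolding rotG_def using pq Gsym[OF T g] by simp
    ultimately show "p < n \<and> q < n \<and> p \<noteq> q \<and> rotG n c G q p" using pq by simp
  qed
  have c2: "\<forall>a b p q. rotG n c G a b \<and> rotG n c G p q \<longrightarrow> \<not> chords_cross a b p q"
  proof (intro allI impI)
    fix a b p q assume a: "rotG n c G a b \<and> rotG n c G p q"
    show "\<not> chords_cross a b p q"
    proof
      assume cr: "chords_cross a b p q"
      have bnd: "a < n" "b < n" "p < n" "q < n" using a unfolding rotG_def by auto
      have g1: "G ((a + c) mod n) ((b + c) mod n)" and g2: "G ((p + c) mod n) ((q + c) mod n)"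
        using a unfolding rotG_def by auto
      from cross_rot2[OF bnd cn cr] show False
      proof
        assume "chords_cross ((a + c) mod n) ((b + c) mod n) ((p + c) mod n) ((q + c) mod n)"
        then show False using nocross[OF T g1 g2] by simp
      next
        assume "chords_cross ((a + c) mod n) ((b + c) mod n) ((q + c) mod n) ((p + c) mod n)"
        then show False using nocross[OF T g1 Gsym[OF T g2]] by simp
      qed
    qed
  qed
  have c3: "\<forall>p q. p < n \<and> q < n \<and> p \<noteq> q \<and> \<not> rotG n c G p q \<longrightarrow> (\<exists>a b. rotG n c G a b \<and> chords_cross p q a b)"
  proof (intro allI impI)
    fix p q assume a: "p < n \<and> q < n \<and> p \<noteq> q \<and> \<not> rotG n c G p q"
    have pn: "p < n" "q < n" "p \<noteq> q" using a by auto
    have ne: "(p + c) mod n \<noteq> (q + c) mod n" using inj_on_eq_iff[OF r_inj[OF cn], of p q] pn by simp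
    have "\<exists>a b. G a b \<and> chords_cross ((p + c) mod n) ((q + c) mod n) a b"
      using a ne cn by (intro maxl[OF T]) (auto simp: rotG_def)
    then obtain a b where ab: "G a b" "chords_cross ((p + c) mod n) ((q + c) mod n) a b" by blast
    have abn: "a < n" "b < n" using Gbnd[OF T ab(1)] by auto
    obtain a' where a': "a' < n" "a = (a' + c) mod n" using r_surj[OF cn abn(1)] by blast
    obtain b' where b': "b' < n" "b = (b' + c) mod n" using r_surj[OF cn abn(2)] by blast
    have cr: "chords_cross ((p + c) mod n) ((q + c) mod n) ((a' + c) mod n) ((b' + c) mod n)"
      using ab(2) a' b' by simp
    have "chords_cross p q a' b' \<or> chords_cross p q b' a'"
      by (rule cross_rot[OF pn(1) pn(2) a'(1) b'(1) cn cr])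
    moreover have "rotG n c G a' b'" unfolding rotG_def using a' b' ab(1) by simp
    moreover have "rotG n c G b' a'" unfolding rotG_def using a' b' Gsym[OF T ab(1)] by simp
    ultimately show "\<exists>a b. rotG n c G a b \<and> chords_cross p q a b" by blast
  qed
  show ?thesis unfolding tri_def using c1 c2 c3 by blast
qed

lemma rot_nbrs: assumes "p < n" shows "{u. G ((p + c) mod n) u} = (\<lambda>x. (x + c) mod n) ` {u. rotG n c G p u}"
proof
  show "{u. G ((p + c) mod n) u} \<subseteq> (\<lambda>x. (x + c) mod n) ` {u. rotG n c G p u}"
  proof
    fix u assume "u \<in> {u. G ((p + c) mod n) u}"
    then have g: "G ((p + c) mod n) u" by simp
    obtain u' where u': "u' < n" "u = (u' + c) mod n" using r_surj[OF cn] Gbnd[OF T g] by blast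
    have "rotG n c G p u'" unfolding rotG_def using g assms u' by simp
    then show "u \<in> (\<lambda>x. (x + c) mod n) ` {u. rotG n c G p u}" using u'(2) by blast
  qed
  show "(\<lambda>x. (x + c) mod n) ` {u. rotG n c G p u} \<subseteq> {u. G ((p + c) mod n) u}"
    unfolding rotG_def by auto
qed

lemma rot_deg: assumes "p < n" shows "deg (rotG n c G) p = deg G ((p + c) mod n)"
proof -
  have "inj_on (\<lambda>x. (x + c) mod n) {u. rotG n c G p u}"
    by (rule inj_on_subset[OF r_inj[OF cn]]) (auto simp: rotG_def)
  then have "card ((\<lambda>x. (x + c) mod n) ` {u. rotG n c G p u}) = card {u. rotG n c G p u}" by (rule card_image)
  then show ?thesis unfolding deg_def rot_nbrs[OF assms] by simp
qed

lemma rot_ntd: "ntd n (rotG n c G) = ntd n G"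
proof -
  have e: "{v. v < n \<and> deg G v = 2} = (\<lambda>x. (x + c) mod n) ` {v. v < n \<and> deg (rotG n c G) v = 2}"
  proof
    show "{v. v < n \<and> deg G v = 2} \<subseteq> (\<lambda>x. (x + c) mod n) ` {v. v < n \<and> deg (rotG n c G) v = 2}"
    proof
      fix v assume v: "v \<in> {v. v < n \<and> deg G v = 2}"
      obtain v' where v': "v' < n" "v = (v' + c) mod n" using r_surj[OF cn] v by blast
      have "deg (rotG n c G) v' = 2" using rot_deg[OF v'(1)] v v' by simp
      then show "v \<in> (\<lambda>x. (x + c) mod n) ` {v. v < n \<and> deg (rotG n c G) v = 2}"
        using v' by blast
    qed
    show "(\<lambda>x. (x + c) mod n) ` {v. v < n \<and> deg (rotG n c G) v = 2} \<subseteq> {v. v < n \<and> deg G v = 2}"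
    proof
      fix v assume "v \<in> (\<lambda>x. (x + c) mod n) ` {v. v < n \<and> deg (rotG n c G) v = 2}"
      then obtain v' where v': "v' < n" "deg (rotG n c G) v' = 2" "v = (v' + c) mod n" by blast
      then show "v \<in> {v. v < n \<and> deg G v = 2}" using rot_deg[OF v'(1)] cn by simp
    qed
  qed
  have "inj_on (\<lambda>x. (x + c) mod n) {v. v < n \<and> deg (rotG n c G) v = 2}"
    by (rule inj_on_subset[OF r_inj[OF cn]]) auto
  then have "card ((\<lambda>x. (x + c) mod n) ` {v. v < n \<and> deg (rotG n c G) v = 2}) = card {v. v < n \<and> deg (rotG n c G) v = 2}" by (rule card_image)
  then show ?thesis unfolding ntd_def e by simp
qed

lemma rot_dd:
  assumes "ddp n (rotG n c G) D"
  shows "ddp n G ((\<lambda>x. (x + c) mod n) ` D) \<and> card ((\<lambda>x. (x + c) mod n) ` D) = card D"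
proof -
  have sD: "D \<subseteq> {..<n}" using assms unfolding ddp_def by blast
  have injD: "inj_on (\<lambda>x. (x + c) mod n) D" by (rule inj_on_subset[OF r_inj[OF cn] sD])
  have "2 \<le> card {u \<in> (\<lambda>x. (x + c) mod n) ` D. u = v \<or> G v u}" if v: "v < n" for v
  proof -
    obtain v' where v': "v' < n" "v = (v' + c) mod n" using r_surj[OF cn v] by blast
    have e: "{u \<in> (\<lambda>x. (x + c) mod n) ` D. u = v \<or> G v u} = (\<lambda>x. (x + c) mod n) ` {u \<in> D. u = v' \<or> rotG n c G v' u}"
    proof
      show "{u \<in> (\<lambda>x. (x + c) mod n) ` D. u = v \<or> G v u} \<subseteq> (\<lambda>x. (x + c) mod n) ` {u \<in> D. u = v' \<or> rotG n c G v' u}"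
      proof
        fix u assume "u \<in> {u \<in> (\<lambda>x. (x + c) mod n) ` D. u = v \<or> G v u}"
        then obtain x where x: "x \<in> D" "u = (x + c) mod n" "u = v \<or> G v u" by auto
        have xn: "x < n" using x sD by auto
        have "x = v' \<or> rotG n c G v' x"
        proof (cases "u = v")
          case True
          then have "(x + c) mod n = (v' + c) mod n" using x v' by simp
          then have "x = v'" using inj_on_eq_iff[OF r_inj[OF cn], of x v'] xn v' by simp
          then show ?thesis by simp
        next
          case False
          then show ?thesis using x v' xn unfolding rotG_def by auto
        qed
        then show "u \<in> (\<lambda>x. (x + c) mod n) ` {u \<in> D. u = v' \<or> rotG n c G v' u}" using x by auto
      qed
      show "(\<lambda>x. (x + c) mod n) ` {u \<in> D. u = v' \<or> rotG n c G v' u} \<subseteq> {u \<in> (\<lambda>x. (x + c) mod n) ` D. u = v \<or> G v u}"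
        using v' unfolding rotG_def by auto
    qed
    have inj2: "inj_on (\<lambda>x. (x + c) mod n) {u \<in> D. u = v' \<or> rotG n c G v' u}"
      by (rule inj_on_subset[OF injD]) auto
    have "2 \<le> card {u \<in> D. u = v' \<or> rotG n c G v' u}" using assms v' unfolding ddp_def by blast
    then show ?thesis unfolding e card_image[OF inj2] .
  qed
  moreover have "(\<lambda>x. (x + c) mod n) ` D \<subseteq> {..<n}" using cn by auto
  ultimately show ?thesis unfolding ddp_def using card_image[OF injD] by blast
qed

end




context
  fixes n :: nat and G :: "nat \<Rightarrow> nat \<Rightarrow> bool"
  assumes T: "tri n G" and n4: "4 \<le> n"
begin

lemma bound1: "\<exists>D. ddp n G D \<and> 2 * card D \<le> n + ntd n G"
proof -
  obtain p where p: "p < n" "deg G p = 2" using ear_exists[OF T] n4 by auto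
  have T': "tri n (rotG n p G)" by (rule rot_tri[OF T p(1)])
  have "deg (rotG n p G) 0 = deg G ((0 + p) mod n)" by (rule rot_deg[OF T p(1)]) (use n4 in simp)
  then have d0: "deg (rotG n p G) 0 = 2" using p by simp
  obtain D' where D': "ddp n (rotG n p G) D'" "2 * card D' \<le> n + ntd n (rotG n p G)"
    using top_ear0[OF T' n4 d0] by blast
  have "ddp n G ((\<lambda>x. (x + p) mod n) ` D') \<and> card ((\<lambda>x. (x + p) mod n) ` D') = card D'"
    by (rule rot_dd[OF T p(1) D'(1)])
  moreover have "ntd n (rotG n p G) = ntd n G" by (rule rot_ntd[OF T p(1)])
  ultimately show ?thesis using D'(2) by metis
qed

lemma ear_gen:
  assumes p: "p < n" "deg G p = 2"
  shows "\<exists>a b. a \<noteq> b \<and> G p a \<and> G p b \<and> deg G a \<noteq> 2 \<and> deg G b \<noteq> 2"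
proof -
  have T': "tri n (rotG n p G)" by (rule rot_tri[OF T p(1)])
  have "deg (rotG n p G) 0 = deg G ((0 + p) mod n)" by (rule rot_deg[OF T p(1)]) (use n4 in simp)
  then have d0: "deg (rotG n p G) 0 = 2" using p by simp
  have EF: "{u. rotG n p G 0 u} = {1, n - 1}" "deg (rotG n p G) 1 \<noteq> 2" "deg (rotG n p G) (n - 1) \<noteq> 2"
    using ear_facts[OF T' n4 d0] by auto
  have g1: "rotG n p G 0 1" and g2: "rotG n p G 0 (n - 1)" using EF(1) by auto
  have pm: "(0 + p) mod n = p" using p by simp
  have h1: "G p ((1 + p) mod n)" using g1 unfolding rotG_def pm by blast
  have h2: "G p ((n - 1 + p) mod n)" using g2 unfolding rotG_def pm by blast
  have ne: "(1 + p) mod n \<noteq> (n - 1 + p) mod n"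
    using inj_on_eq_iff[OF r_inj[OF p(1)], of 1 "n - 1"] n4 by simp
  have e1: "deg G ((1 + p) mod n) \<noteq> 2" using rot_deg[OF T p(1), of 1] EF(2) n4 by simp
  have e2: "deg G ((n - 1 + p) mod n) \<noteq> 2" using rot_deg[OF T p(1), of "n - 1"] EF(3) n4 by simp
  show ?thesis using ne h1 h2 e1 e2 by blast
qed

lemma nonear_gen:
  assumes p: "p < n" "deg G p \<noteq> 2"
  shows "\<exists>q. G p q \<and> deg G q \<noteq> 2"
proof -
  define H where "H = rotG n p G"
  have T': "tri n H" unfolding H_def by (rule rot_tri[OF T p(1)])
  have pm: "(0 + p) mod n = p" using p by simp
  have dH: "\<And>x. x < n \<Longrightarrow> deg H x = deg G ((x + p) mod n)" unfolding H_def using rot_deg[OF T p(1)] by simp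
  have gH: "\<And>x. H 0 x \<Longrightarrow> G p ((x + p) mod n)" unfolding H_def rotG_def using pm by simp
  have h01: "H 0 1" using boundary[OF T', of 0] n4 by simp
  show ?thesis
  proof (cases "deg H 1 = 2")
    case False
    then show ?thesis using gH[OF h01] dH[of 1] n4 by auto
  next
    case True
    have h12: "H 1 2" using boundary[OF T', of 1] n4 by (simp add: numeral_2_eq_2)
    have h10: "H 1 0" using Gsym[OF T' h01] .
    have sub: "{0, 2} \<subseteq> {u. H 1 u}" using h12 h10 by auto
    have nb: "{u. H 1 u} = {0, 2}"
      using card_subset_eq[OF nbr_fin[OF T'] sub] True unfolding deg_def by simp
    have h02: "H 0 2"
    proof (rule ccontr)
      assume nh: "\<not> H 0 2"
      have "\<exists>a b. H a b \<and> chords_cross 0 2 a b" using nh n4 by (intro maxl[OF T']) auto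
      then obtain a b where ab: "H a b" "chords_cross 0 2 a b" by blast
      then have a1: "a = 1" and b2: "2 < b" unfolding chords_cross_def by auto
      have "b \<in> {u. H 1 u}" using ab(1) a1 by simp
      then have "b \<in> {0, 2}" by (simp only: nb)
      then show False using b2 by auto
    qed
    have h23: "H 2 3" using boundary[OF T', of 2] n4 by (simp add: numeral_3_eq_3 numeral_2_eq_2)
    have "3 \<le> deg H 2" unfolding deg_def
      by (rule card3[of "{u. H 2 u}" 1 3 0]) (use nbr_fin[OF T'] Gsym[OF T' h12] h23 Gsym[OF T' h02] in auto)
    then have "deg G ((2 + p) mod n) \<noteq> 2" using dH[of 2] n4 by simp
    then show ?thesis using gH[OF h02] by blast
  qed
qed

lemma bound2: "\<exists>D. ddp n G D \<and> card D + ntd n G = n"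
proof -
  define D where "D = {v. v < n \<and> deg G v \<noteq> 2}"
  have u: "{..<n} = D \<union> {v. v < n \<and> deg G v = 2}" unfolding D_def by auto
  have c: "card (D \<union> {v. v < n \<and> deg G v = 2}) = card D + card {v. v < n \<and> deg G v = 2}"
    by (rule card_Un_disjoint) (auto simp: D_def)
  have "card D + ntd n G = n"
    unfolding ntd_def using c u[symmetric] by simp
  moreover have "ddp n G D" unfolding ddp_def
  proof (intro conjI allI impI)
    show "D \<subseteq> {..<n}" unfolding D_def by auto
    fix v assume v: "v < n"
    have fS: "finite {u \<in> D. u = v \<or> G v u}" unfolding D_def by simp
    show "2 \<le> card {u \<in> D. u = v \<or> G v u}"
    proof (cases "deg G v = 2")
      case True
      obtain a b where ab: "a \<noteq> b" "G v a" "G v b" "deg G a \<noteq> 2" "deg G b \<noteq> 2" using ear_gen[OF v True] by blast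
      have "a < n" "b < n" using Gbnd[OF T ab(2)] Gbnd[OF T ab(3)] by auto
      then show ?thesis by (intro card2[OF fS, of a b]) (use ab in \<open>auto simp: D_def\<close>)
    next
      case False
      obtain q where q: "G v q" "deg G q \<noteq> 2" using nonear_gen[OF v False] by blast
      have "q < n" "v \<noteq> q" using Gbnd[OF T q(1)] Girr[OF T q(1)] by auto
      then show ?thesis by (intro card2[OF fS, of v q]) (use q v False in \<open>auto simp: D_def\<close>)
    qed
  qed
  ultimately show ?thesis by blast
qed

end




lemma cross_sym1: "chords_cross q p x y = chords_cross p q x y"
  unfolding chords_cross_def by (simp add: min.commute max.commute)

lemma cross_distinct: "chords_cross a b c d \<Longrightarrow> c \<noteq> a \<and> c \<noteq> b"
  unfolding chords_cross_def by (auto simp: min_def max_def split: if_splits)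

lemma transfer:
  fixes V :: "'a set" and E :: "'a \<Rightarrow> 'a \<Rightarrow> bool"
  assumes mo: "maximal_outerplanar V E"
  shows "\<exists>G. tri (card V) G \<and> (\<forall>Dp. ddp (card V) G Dp \<longrightarrow> (\<exists>D. double_dominating V E D \<and> card D = card Dp))
             \<and> ntd (card V) G = card {v \<in> V. degree V E v = 2}"
proof -
  define n where "n = card V"
  have op: "outerplanar V E" and mx: "\<forall>u\<in>V. \<forall>v\<in>V. u \<noteq> v \<and> \<not> E u v \<longrightarrow> \<not> outerplanar V (add_edge E u v)"
    using mo unfolding maximal_outerplanar_def by auto
  have sg: "simple_graph V E" using op unfolding outerplanar_def by auto
  have finV: "finite V" using sg unfolding simple_graph_def by auto
  have sgE: "\<And>u v. E u v \<Longrightarrow> u \<in> V \<and> v \<in> V \<and> u \<noteq> v \<and> E v u" using sg unfolding simple_graph_def by blast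
  obtain f where bij: "bij_betw f V {0..<n}"
    and nc: "\<And>a b c d. E a b \<Longrightarrow> E c d \<Longrightarrow> \<not> chords_cross (f a) (f b) (f c) (f d)"
    using op unfolding outerplanar_def n_def by blast
  define h where "h = inv_into V f"
  have injf: "inj_on f V" using bij unfolding bij_betw_def by blast
  have imf: "f ` V = {0..<n}" using bij unfolding bij_betw_def by blast
  have hf: "\<And>x. x \<in> V \<Longrightarrow> h (f x) = x" unfolding h_def using injf by simp
  have fV: "\<And>x. x \<in> V \<Longrightarrow> f x < n" using imf by auto
  have fh: "\<And>p. p < n \<Longrightarrow> f (h p) = p" unfolding h_def using imf by (simp add: f_inv_into_f)
  have hV: "\<And>p. p < n \<Longrightarrow> h p \<in> V" unfolding h_def using imf by (metis atLeastLessThan_iff inv_into_into zero_le)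
  define G where "G = (\<lambda>p q. p < n \<and> q < n \<and> E (h p) (h q))"
  have GE: "\<And>x y. x \<in> V \<Longrightarrow> y \<in> V \<Longrightarrow> G (f x) (f y) \<longleftrightarrow> E x y" unfolding G_def using fV hf by auto
  have c1: "\<forall>p q. G p q \<longrightarrow> p < n \<and> q < n \<and> p \<noteq> q \<and> G q p"
  proof (intro allI impI)
    fix p q assume g: "G p q"
    then have pq: "p < n" "q < n" "E (h p) (h q)" unfolding G_def by auto
    have "h p \<noteq> h q" "E (h q) (h p)" using sgE[OF pq(3)] by auto
    then show "p < n \<and> q < n \<and> p \<noteq> q \<and> G q p" using pq unfolding G_def by auto
  qed
  have c2: "\<forall>a b c d. G a b \<and> G c d \<longrightarrow> \<not> chords_cross a b c d"
  proof (intro allI impI)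
    fix a b c d assume g: "G a b \<and> G c d"
    then have "\<not> chords_cross (f (h a)) (f (h b)) (f (h c)) (f (h d))" using nc unfolding G_def by blast
    then show "\<not> chords_cross a b c d" using g fh unfolding G_def by auto
  qed
  have c3: "\<forall>p q. p < n \<and> q < n \<and> p \<noteq> q \<and> \<not> G p q \<longrightarrow> (\<exists>a b. G a b \<and> chords_cross p q a b)"
  proof (intro allI impI)
    fix p q assume a: "p < n \<and> q < n \<and> p \<noteq> q \<and> \<not> G p q"
    define u where "u = h p"
    define v where "v = h q"
    have uv: "u \<in> V" "v \<in> V" "f u = p" "f v = q" unfolding u_def v_def using a hV fh by auto
    have une: "u \<noteq> v" using uv a by auto
    have nE: "\<not> E u v" using a unfolding G_def u_def v_def by auto
    have nop: "\<not> outerplanar V (add_edge E u v)" using mx uv une nE by blast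
    show "\<exists>a b. G a b \<and> chords_cross p q a b"
    proof (rule ccontr)
      assume nx: "\<not> (\<exists>a b. G a b \<and> chords_cross p q a b)"
      have E2: "\<And>x y. E x y \<Longrightarrow> \<not> chords_cross p q (f x) (f y)"
        using nx GE sgE by blast
      have sg2: "simple_graph V (add_edge E u v)"
        unfolding simple_graph_def add_edge_def using finV sgE uv une by blast
      have nc2: "\<forall>a b c d. add_edge E u v a b \<and> add_edge E u v c d \<longrightarrow> \<not> chords_cross (f a) (f b) (f c) (f d)"
      proof (intro allI impI notI)
        fix a b c d assume ab: "add_edge E u v a b \<and> add_edge E u v c d" and cr: "chords_cross (f a) (f b) (f c) (f d)"
        have A: "E a b \<or> (a = u \<and> b = v) \<or> (a = v \<and> b = u)" and C: "E c d \<or> (c = u \<and> d = v) \<or> (c = v \<and> d = u)"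
          using ab unfolding add_edge_def by auto
        show False
        proof (cases "E a b")
          case Eab: True
          show False
          proof (cases "E c d")
            case True then show False using nc[OF Eab True] cr by simp
          next
            case False
            then have cd: "(c = u \<and> d = v) \<or> (c = v \<and> d = u)" using C by simp
            have cr2: "chords_cross (f a) (f b) p q \<or> chords_cross (f a) (f b) q p" using cd cr uv by auto
            then have "chords_cross p q (f a) (f b) \<or> chords_cross p q (f b) (f a)"
              using cross_swap cross_sym1 by blast
            then show False using E2[OF Eab] E2[OF conjunct2[OF conjunct2[OF conjunct2[OF sgE[OF Eab]]]]] by blast
          qed
        next
          case nab: False
          then have abuv: "(a = u \<and> b = v) \<or> (a = v \<and> b = u)" using A by simp
          have cr2: "chords_cross p q (f c) (f d)" using abuv cr uv cross_sym1 by auto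
          show False
          proof (cases "E c d")
            case True then show False using E2[OF True] cr2 by simp
          next
            case False
            then have cd: "(c = u \<and> d = v) \<or> (c = v \<and> d = u)" using C by simp
            then have "f c = p \<or> f c = q" using uv by auto
            then show False using cross_distinct[OF cr2] by auto
          qed
        qed
      qed
      have "outerplanar V (add_edge E u v)"
        unfolding outerplanar_def using sg2 nc2 bij n_def by blast
      then show False using nop by simp
    qed
  qed
  have T: "tri n G" unfolding tri_def using c1 c2 c3 by blast
  have injh: "inj_on h {..<n}"
  proof (rule inj_onI)
    fix x y assume "x \<in> {..<n}" "y \<in> {..<n}" "h x = h y"
    then show "x = y" using fh by (metis lessThan_iff)
  qed
  have dd: "\<forall>Dp. ddp n G Dp \<longrightarrow> (\<exists>D. double_dominating V E D \<and> card D = card Dp)"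
  proof (intro allI impI)
    fix Dp assume d: "ddp n G Dp"
    have sD: "Dp \<subseteq> {..<n}" using d unfolding ddp_def by blast
    have injD: "inj_on h Dp" using inj_on_subset[OF injh sD] .
    have "\<forall>x\<in>V. 2 \<le> card {w \<in> h ` Dp. w = x \<or> E x w}"
    proof
      fix x assume x: "x \<in> V"
      have e: "{w \<in> h ` Dp. w = x \<or> E x w} = h ` {u \<in> Dp. u = f x \<or> G (f x) u}"
      proof
        show "{w \<in> h ` Dp. w = x \<or> E x w} \<subseteq> h ` {u \<in> Dp. u = f x \<or> G (f x) u}"
        proof
          fix w assume "w \<in> {w \<in> h ` Dp. w = x \<or> E x w}"
          then obtain u where u: "u \<in> Dp" "w = h u" "w = x \<or> E x w" by auto
          have un: "u < n" using u sD by auto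
          have "u = f x \<or> G (f x) u"
          proof (cases "w = x")
            case True then show ?thesis using fh[OF un] u by simp
          next
            case False then show ?thesis using u un fV[OF x] hf[OF x] unfolding G_def by simp
          qed
          then show "w \<in> h ` {u \<in> Dp. u = f x \<or> G (f x) u}" using u by blast
        qed
        show "h ` {u \<in> Dp. u = f x \<or> G (f x) u} \<subseteq> {w \<in> h ` Dp. w = x \<or> E x w}"
          using hf[OF x] unfolding G_def by auto
      qed
      have "2 \<le> card {u \<in> Dp. u = f x \<or> G (f x) u}" using d fV[OF x] unfolding ddp_def by blast
      moreover have "card (h ` {u \<in> Dp. u = f x \<or> G (f x) u}) = card {u \<in> Dp. u = f x \<or> G (f x) u}"
        by (rule card_image) (rule inj_on_subset[OF injD], auto)
      ultimately show "2 \<le> card {w \<in> h ` Dp. w = x \<or> E x w}" unfolding e by simp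
    qed
    moreover have "h ` Dp \<subseteq> V" using sD hV by auto
    ultimately have "double_dominating V E (h ` Dp)" unfolding double_dominating_def by blast
    moreover have "card (h ` Dp) = card Dp" by (rule card_image[OF injD])
    ultimately show "\<exists>D. double_dominating V E D \<and> card D = card Dp" by blast
  qed
  have nbr: "\<And>x. x \<in> V \<Longrightarrow> {u. G (f x) u} = f ` {w \<in> V. E x w}"
  proof
    fix x assume x: "x \<in> V"
    show "{u. G (f x) u} \<subseteq> f ` {w \<in> V. E x w}"
    proof
      fix u assume "u \<in> {u. G (f x) u}"
      then have u: "u < n" "E x (h u)" unfolding G_def using hf[OF x] by auto
      then show "u \<in> f ` {w \<in> V. E x w}" using hV[OF u(1)] fh[OF u(1)] by (metis (mono_tags, lifting) image_eqI mem_Collect_eq)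
    qed
    show "f ` {w \<in> V. E x w} \<subseteq> {u. G (f x) u}" using GE x by auto
  qed
  have degeq: "\<And>x. x \<in> V \<Longrightarrow> degree V E x = deg G (f x)"
  proof -
    fix x assume x: "x \<in> V"
    have "card (f ` {w \<in> V. E x w}) = card {w \<in> V. E x w}"
      by (rule card_image) (rule inj_on_subset[OF injf], auto)
    then show "degree V E x = deg G (f x)" unfolding degree_def deg_def nbr[OF x] by simp
  qed
  have ee: "{p. p < n \<and> deg G p = 2} = f ` {v \<in> V. degree V E v = 2}"
  proof
    show "{p. p < n \<and> deg G p = 2} \<subseteq> f ` {v \<in> V. degree V E v = 2}"
    proof
      fix p assume "p \<in> {p. p < n \<and> deg G p = 2}"
      then have p: "p < n" "deg G p = 2" by auto
      have "degree V E (h p) = 2" using degeq[OF hV[OF p(1)]] fh[OF p(1)] p by simp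
      then show "p \<in> f ` {v \<in> V. degree V E v = 2}" using hV[OF p(1)] fh[OF p(1)] by (metis (mono_tags, lifting) image_eqI mem_Collect_eq)
    qed
    show "f ` {v \<in> V. degree V E v = 2} \<subseteq> {p. p < n \<and> deg G p = 2}" using degeq fV by auto
  qed
  have "card (f ` {v \<in> V. degree V E v = 2}) = card {v \<in> V. degree V E v = 2}"
    by (rule card_image) (rule inj_on_subset[OF injf], auto)
  then have "ntd n G = card {v \<in> V. degree V E v = 2}" unfolding ntd_def ee by simp
  then show ?thesis using T dd unfolding n_def by blast
qed

theorem corollary3p7:
  fixes V :: "'a set" and E :: "'a \<Rightarrow> 'a \<Rightarrow> bool"
  assumes "maximal_outerplanar V E"
    and "card V \<ge> 4"
  defines "n \<equiv> card V"
    and "t \<equiv> card {v \<in> V. degree V E v = 2}"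
  shows "(real t < real n / 3 \<longrightarrow> double_domination_number V E \<le> (n + t) div 2)
       \<and> (\<not> (real t < real n / 3) \<longrightarrow> double_domination_number V E \<le> n - t)"
proof -
  obtain G where T: "tri n G" and dd: "\<And>Dp. ddp n G Dp \<Longrightarrow> \<exists>D. double_dominating V E D \<and> card D = card Dp"
    and nt: "ntd n G = t"
    using transfer[OF assms(1)] unfolding n_def t_def by blast
  have n4: "4 \<le> n" using assms(2) unfolding n_def .
  have le: "double_domination_number V E \<le> card D" if "double_dominating V E D" for D
    unfolding double_domination_number_def by (rule Least_le) (use that in blast)
  obtain Dp1 where D1: "ddp n G Dp1" "2 * card Dp1 \<le> n + t" using bound1[OF T n4] nt by auto
  obtain D1 where E1: "double_dominating V E D1" "card D1 = card Dp1" using dd[OF D1(1)] by blast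
  have r1: "double_domination_number V E \<le> (n + t) div 2" using le[OF E1(1)] E1(2) D1(2) by linarith
  obtain Dp2 where D2: "ddp n G Dp2" "card Dp2 + t = n" using bound2[OF T n4] nt by auto
  obtain D2 where E2: "double_dominating V E D2" "card D2 = card Dp2" using dd[OF D2(1)] by blast
  have r2: "double_domination_number V E \<le> n - t" using le[OF E2(1)] E2(2) D2(2) by linarith
  show ?thesis using r1 r2 by blast
qed



end
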